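(* Let $p>0$ and, for $\lambda<1$, let $v(x;\lambda)$ be the unique $C^1(\mathbb{R})$ solution of $-v''+v-(2p+1)(p+1)\operatorname{sech}^2(px)v=\lambda v$ with $\lim_{x\to+\infty}v(x;\lambda)e^{\sqrt{1-\lambda}x}=1$. Assume that $v(\cdot;\lambda_1)$ has a simple zero at $x=x_1\in\mathbb{R}$ for some $\lambda_1\in(-\infty,1)$. Then there exists a unique $C^1$ function $\lambda\mapsto x_0(\lambda)$, defined for $\lambda$ near $\lambda_1$, such that $v(\cdot;\lambda)$ has a simple zero at $x=x_0(\lambda)$, $x_0(\lambda_1)=x_1$, and $x_0'(\lambda_1)>0$. *)

theory Defs
  imports "HOL-Analysis.Analysis"
begin

definition is_sol :: "real \<Rightarrow> real \<Rightarrow> (real \<Rightarrow> real) \<Rightarrow> bool" where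
  "is_sol p lam v \<longleftrightarrow>
     (\<exists>v'. \<forall>x. (v has_real_derivative v' x) (at x) \<and>
        (v' has_real_derivative
           ((1 - lam) * v x - (2 * p + 1) * (p + 1) * (1 / cosh (p * x))\<^sup>2 * v x)) (at x))
   \<and> ((\<lambda>x. v x * exp (sqrt (1 - lam) * x)) \<longlongrightarrow> 1) at_top"

definition simple_zero :: "(real \<Rightarrow> real) \<Rightarrow> real \<Rightarrow> bool" where
  "simple_zero f x \<longleftrightarrow> f x = 0 \<and> f differentiable (at x) \<and> deriv f x \<noteq> 0"

end

theory Submission
  imports Defs
begin


lemma mono_lim_exists:
  fixes f :: "real \<Rightarrow> real"
  assumes mono: "\<And>x y. a \<le> x \<Longrightarrow> x \<le> y \<Longrightarrow> f x \<le> f y" and bd: "\<And>x. a \<le> x \<Longrightarrow> f x \<le> B"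
  shows "\<exists>L. (f \<longlongrightarrow> L) at_top"
proof -
  define L where "L = Sup (f ` {a..})"
  have bdd: "bdd_above (f ` {a..})" using bd by (auto intro!: bdd_aboveI)
  have ne: "{a..} \<noteq> {}" by auto
  have up: "f x \<le> L" if "a \<le> x" for x unfolding L_def using bdd that by (auto intro!: cSUP_upper)
  have "(f \<longlongrightarrow> L) at_top"
  proof (rule order_tendstoI)
    fix y assume "y < L"
    then obtain x0 where x0: "x0 \<ge> a" "y < f x0" unfolding L_def using less_cSUP_iff[OF ne bdd] by auto
    show "\<forall>\<^sub>F x in at_top. y < f x"
      unfolding eventually_at_top_linorder
      by (rule exI[of _ x0]) (use x0 mono in \<open>fastforce\<close>)
  next
    fix y assume "L < y"
    show "\<forall>\<^sub>F x in at_top. f x < y"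
      unfolding eventually_at_top_linorder
      by (rule exI[of _ a]) (use up \<open>L < y\<close> in \<open>fastforce\<close>)
  qed
  then show ?thesis by blast
qed

lemma exp_neg_lim0:
  fixes \<kappa> :: real assumes "\<kappa> > 0"
  shows "((\<lambda>x. exp (-\<kappa>*x)) \<longlongrightarrow> 0) at_top"
proof -
  have "LIM x at_top. \<kappa> * x :> at_top"
    by (rule filterlim_tendsto_pos_mult_at_top[OF tendsto_const assms filterlim_ident])
  hence "LIM x at_top. - (\<kappa> * x) :> at_bot" by (simp add: filterlim_uminus_at_bot)
  thus ?thesis by (simp add: filterlim_compose[OF exp_at_bot])
qed

definition edom :: "(real \<Rightarrow> real) \<Rightarrow> real \<Rightarrow> bool" where
  "edom g a \<longleftrightarrow> continuous_on UNIV g \<and> (\<exists>B \<kappa>. \<kappa> > 0 \<and> (\<forall>t\<ge>a. \<bar>g t\<bar> \<le> B * exp (-\<kappa>*t)))"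

definition tail :: "(real \<Rightarrow> real) \<Rightarrow> real \<Rightarrow> real" where
  "tail g x = Lim at_top (\<lambda>R. integral {x..R} g)"

lemma integral_exp_neg:
  fixes \<kappa> x R :: real
  assumes "\<kappa> > 0" "x \<le> R"
  shows "integral {x..R} (\<lambda>t. exp (-\<kappa>*t)) = (exp (-\<kappa>*x) - exp (-\<kappa>*R)) / \<kappa>"
proof -
  have "((\<lambda>t. exp (-\<kappa>*t)) has_integral ((- exp (-\<kappa>*R)/\<kappa>) - (- exp (-\<kappa>*x)/\<kappa>))) {x..R}"
    apply (rule fundamental_theorem_of_calculus[OF assms(2)])
    unfolding has_real_derivative_iff_has_vector_derivative[symmetric]
    using assms(1) by (auto intro!: derivative_eq_intros simp: field_simps)
  then show ?thesis by (simp add: integral_unique diff_divide_distrib)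
qed

lemma cont_integrable: "continuous_on UNIV g \<Longrightarrow> (g::real\<Rightarrow>real) integrable_on {x..R}"
  by (rule integrable_continuous_interval, erule continuous_on_subset, simp)

lemma tail_conv:
  assumes "edom g a" "a \<le> x"
  shows "((\<lambda>R. integral {x..R} g) \<longlongrightarrow> tail g x) at_top"
proof -
  obtain B \<kappa> where k: "\<kappa> > 0" and bd: "\<And>t. t \<ge> a \<Longrightarrow> \<bar>g t\<bar> \<le> B * exp (-\<kappa>*t)"
    and cg: "continuous_on UNIV g" using assms(1) unfolding edom_def by blast
  define e where "e = (\<lambda>t::real. B * exp (-\<kappa>*t))"
  have ce: "continuous_on UNIV e" unfolding e_def by (intro continuous_intros)
  have ie: "integral {x..R} e = B * ((exp (-\<kappa>*x) - exp (-\<kappa>*R)) / \<kappa>)" if "x \<le> R" for R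
    unfolding e_def using integral_exp_neg[OF k that] by simp
  define F where "F = (\<lambda>R. integral {x..R} (\<lambda>t. g t + e t))"
  have cge: "continuous_on UNIV (\<lambda>t. g t + e t)" using cg ce by (intro continuous_intros)
  have "\<exists>L. (F \<longlongrightarrow> L) at_top"
  proof (rule mono_lim_exists[where a=x and B="2 * B * (exp (-\<kappa>*x) / \<kappa>)"])
    fix y z assume yz: "x \<le> y" "y \<le> z"
    have "integral {x..y} (\<lambda>t. g t + e t) + integral {y..z} (\<lambda>t. g t + e t) = integral {x..z} (\<lambda>t. g t + e t)"
      using yz by (intro Henstock_Kurzweil_Integration.integral_combine[OF _ _ cont_integrable[OF cge]]) auto
    moreover have "integral {y..z} (\<lambda>t. g t + e t) \<ge> 0"
      apply (rule integral_nonneg[OF cont_integrable[OF cge]])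
      using bd yz assms(2) unfolding e_def by (smt (verit) atLeastAtMost_iff)
    ultimately show "F y \<le> F z" unfolding F_def by linarith
  next
    fix y assume y: "x \<le> y"
    have "F y \<le> integral {x..y} (\<lambda>t. 2 * e t)"
      unfolding F_def
      apply (rule integral_le[OF cont_integrable[OF cge]])
       apply (rule cont_integrable) using ce apply (intro continuous_intros, simp)
      using bd assms(2) unfolding e_def by (smt (verit) atLeastAtMost_iff)
    also have "\<dots> = 2 * integral {x..y} e" by simp
    also have "\<dots> = 2 * (B * ((exp (-\<kappa>*x) - exp (-\<kappa>*y)) / \<kappa>))" using ie[OF y] by simp
    also have "\<dots> \<le> 2 * B * (exp (-\<kappa>*x) / \<kappa>)"
    proof -
      have "0 \<le> B * exp (-\<kappa>*a)" using bd[of a] by linarith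
      hence B0: "B \<ge> 0" by (simp add: zero_le_mult_iff)
      have "B * ((exp (-\<kappa>*x) - exp (-\<kappa>*y)) / \<kappa>) = B * (exp (-\<kappa>*x) / \<kappa>) - B * (exp (-\<kappa>*y) / \<kappa>)"
        by (simp add: diff_divide_distrib right_diff_distrib)
      moreover have "B * (exp (-\<kappa>*y) / \<kappa>) \<ge> 0" using B0 k by simp
      ultimately show ?thesis by simp
    qed
    finally show "F y \<le> 2 * B * (exp (-\<kappa>*x) / \<kappa>)" .
  qed
  then obtain L where L: "(F \<longlongrightarrow> L) at_top" by blast
  have E: "((\<lambda>R. B * ((exp (-\<kappa>*x) - exp (-\<kappa>*R)) / \<kappa>)) \<longlongrightarrow> B * ((exp (-\<kappa>*x) - 0) / \<kappa>)) at_top"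
    using k by (intro tendsto_intros exp_neg_lim0) auto
  have "((\<lambda>R. F R - B * ((exp (-\<kappa>*x) - exp (-\<kappa>*R)) / \<kappa>)) \<longlongrightarrow> L - B * ((exp (-\<kappa>*x) - 0) / \<kappa>)) at_top"
    by (intro tendsto_diff L E)
  moreover have "\<forall>\<^sub>F R in at_top. F R - B * ((exp (-\<kappa>*x) - exp (-\<kappa>*R)) / \<kappa>) = integral {x..R} g"
    unfolding eventually_at_top_linorder
  proof (rule exI[of _ x], intro allI impI)
    fix R assume R: "R \<ge> x"
    have "F R = integral {x..R} g + integral {x..R} e"
      unfolding F_def using integral_add[OF cont_integrable[OF cg] cont_integrable[OF ce]] by blast
    then show "F R - B * ((exp (-\<kappa>*x) - exp (-\<kappa>*R)) / \<kappa>) = integral {x..R} g" using ie[OF R] by simp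
  qed
  ultimately have "((\<lambda>R. integral {x..R} g) \<longlongrightarrow> L - B * ((exp (-\<kappa>*x) - 0) / \<kappa>)) at_top"
    by (rule Lim_transform_eventually)
  moreover from this have "Lim at_top (\<lambda>R. integral {x..R} g) = L - B * ((exp (-\<kappa>*x) - 0) / \<kappa>)"
    by (intro tendsto_Lim) auto
  ultimately show ?thesis unfolding tail_def by simp
qed



lemma edom_mono: "edom g a \<Longrightarrow> a \<le> b \<Longrightarrow> edom g b"
  unfolding edom_def by (meson order_trans)

lemma edomI: "continuous_on UNIV g \<Longrightarrow> \<kappa> > 0 \<Longrightarrow> (\<And>t. t \<ge> a \<Longrightarrow> \<bar>g t\<bar> \<le> B * exp (-\<kappa>*t)) \<Longrightarrow> edom g a"
  unfolding edom_def by blast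

lemma exp_shift:
  fixes \<kappa> \<kappa>1 a t :: real
  assumes "\<kappa> \<le> \<kappa>1" "a \<le> t"
  shows "exp (-\<kappa>1*t) \<le> exp (-(\<kappa>1-\<kappa>)*a) * exp (-\<kappa>*t)"
proof -
  have "-\<kappa>1*t \<le> -(\<kappa>1-\<kappa>)*a + -\<kappa>*t"
    using mult_left_mono[OF assms(2), of "\<kappa>1-\<kappa>"] assms(1) by (simp add: algebra_simps)
  then show ?thesis by (simp add: exp_add[symmetric])
qed

lemma edom_add:
  assumes "edom f a" "edom g a"
  shows "edom (\<lambda>t. f t + g t) a"
proof -
  obtain B1 k1 where k1: "k1 > 0" "\<And>t. t \<ge> a \<Longrightarrow> \<bar>f t\<bar> \<le> B1 * exp (-k1*t)" and cf: "continuous_on UNIV f"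
    using assms(1) unfolding edom_def by blast
  obtain B2 k2 where k2: "k2 > 0" "\<And>t. t \<ge> a \<Longrightarrow> \<bar>g t\<bar> \<le> B2 * exp (-k2*t)" and cg: "continuous_on UNIV g"
    using assms(2) unfolding edom_def by blast
  have "0 \<le> B1 * exp (-k1*a)" using k1(2)[of a] by linarith
  hence B1: "B1 \<ge> 0" by (simp add: zero_le_mult_iff)
  have "0 \<le> B2 * exp (-k2*a)" using k2(2)[of a] by linarith
  hence B2: "B2 \<ge> 0" by (simp add: zero_le_mult_iff)
  define k where "k = min k1 k2"
  show ?thesis
  proof (rule edomI[where \<kappa>=k and B="B1 * exp (-(k1-k)*a) + B2 * exp (-(k2-k)*a)"])
    show "continuous_on UNIV (\<lambda>t. f t + g t)" using cf cg by (intro continuous_intros)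
    show "k > 0" using k1 k2 unfolding k_def by simp
    fix t assume t: "a \<le> t"
    have "B1 * exp (-k1*t) \<le> B1 * (exp (-(k1-k)*a) * exp (-k*t))"
      by (rule mult_left_mono[OF exp_shift B1]) (use t in \<open>auto simp: k_def\<close>)
    moreover have "B2 * exp (-k2*t) \<le> B2 * (exp (-(k2-k)*a) * exp (-k*t))"
      by (rule mult_left_mono[OF exp_shift B2]) (use t in \<open>auto simp: k_def\<close>)
    moreover have "\<bar>f t + g t\<bar> \<le> B1 * exp (-k1*t) + B2 * exp (-k2*t)"
      by (rule order_trans[OF abs_triangle_ineq add_mono[OF k1(2)[OF t] k2(2)[OF t]]])
    moreover have "B1 * (exp (-(k1-k)*a) * exp (-k*t)) + B2 * (exp (-(k2-k)*a) * exp (-k*t))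
        = (B1 * exp (-(k1-k)*a) + B2 * exp (-(k2-k)*a)) * exp (-k*t)" by (simp add: algebra_simps)
    ultimately show "\<bar>f t + g t\<bar> \<le> (B1 * exp (-(k1-k)*a) + B2 * exp (-(k2-k)*a)) * exp (-k*t)"
      by linarith
  qed
qed

lemma edom_cmult:
  assumes "edom f a"
  shows "edom (\<lambda>t. C * f t) a"
proof -
  obtain B1 k1 where k1: "k1 > 0" "\<And>t. t \<ge> a \<Longrightarrow> \<bar>f t\<bar> \<le> B1 * exp (-k1*t)" and cf: "continuous_on UNIV f"
    using assms(1) unfolding edom_def by blast
  show ?thesis
  proof (rule edomI[where \<kappa>=k1 and B="\<bar>C\<bar> * B1"])
    show "continuous_on UNIV (\<lambda>t. C * f t)" using cf by (intro continuous_intros)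
    fix t assume "a \<le> t"
    then show "\<bar>C * f t\<bar> \<le> \<bar>C\<bar> * B1 * exp (-k1*t)" using k1(2)
      by (simp add: abs_mult mult.assoc mult_left_mono)
  qed (use k1 in auto)
qed

lemma edom_diff: "edom f a \<Longrightarrow> edom g a \<Longrightarrow> edom (\<lambda>t. f t - g t) a"
  using edom_add[of f a "\<lambda>t. (-1) * g t"] edom_cmult[of g a "-1"] by simp

lemma edom_bound:
  assumes "edom g a" "continuous_on UNIV f" "\<And>t. t \<ge> a \<Longrightarrow> \<bar>f t\<bar> \<le> \<bar>g t\<bar>"
  shows "edom f a"
  using assms unfolding edom_def by (meson order_trans)

lemma edom_abs: "edom g a \<Longrightarrow> edom (\<lambda>t. \<bar>g t\<bar>) a"
  by (rule edom_bound) (auto simp: edom_def intro: continuous_intros)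

lemma edom_mult_bdd:
  assumes "edom g a" "continuous_on UNIV f" "\<And>t. t \<ge> a \<Longrightarrow> \<bar>f t\<bar> \<le> M"
  shows "edom (\<lambda>t. f t * g t) a"
proof -
  have "edom (\<lambda>t. M * \<bar>g t\<bar>) a" by (intro edom_cmult edom_abs assms)
  then show ?thesis
  proof (rule edom_bound)
    show "continuous_on UNIV (\<lambda>t. f t * g t)" using assms(1,2) unfolding edom_def by (intro continuous_intros) auto
    fix t assume "a \<le> t"
    then have "\<bar>f t\<bar> * \<bar>g t\<bar> \<le> M * \<bar>g t\<bar>" using assms(3) by (simp add: mult_right_mono)
    moreover have "M * \<bar>g t\<bar> \<le> \<bar>M\<bar> * \<bar>g t\<bar>" by (simp add: mult_right_mono)
    ultimately show "\<bar>f t * g t\<bar> \<le> \<bar>M * \<bar>g t\<bar>\<bar>" by (simp add: abs_mult)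
  qed
qed

lemma edom_exp: "\<kappa> > 0 \<Longrightarrow> edom (\<lambda>t. exp (-\<kappa>*t)) a"
  by (rule edomI[where \<kappa>=\<kappa> and B=1]) (auto intro!: continuous_intros)

lemma tail_split:
  assumes "edom g a" "a \<le> x" "x \<le> y"
  shows "tail g x = integral {x..y} g + tail g y"
proof -
  have cg: "continuous_on UNIV g" using assms(1) unfolding edom_def by blast
  have "((\<lambda>R. integral {x..y} g + integral {y..R} g) \<longlongrightarrow> integral {x..y} g + tail g y) at_top"
    by (intro tendsto_intros tail_conv[OF assms(1)]) (use assms in auto)
  moreover have "\<forall>\<^sub>F R in at_top. integral {x..y} g + integral {y..R} g = integral {x..R} g"
    unfolding eventually_at_top_linorder
    by (rule exI[of _ y], intro allI impI Henstock_Kurzweil_Integration.integral_combine[OF assms(3) _ cont_integrable[OF cg]])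
  ultimately have "((\<lambda>R. integral {x..R} g) \<longlongrightarrow> integral {x..y} g + tail g y) at_top"
    by (rule Lim_transform_eventually)
  then show ?thesis by (rule tendsto_unique[OF trivial_limit_at_top_linorder tail_conv[OF assms(1,2)]])
qed

lemma tail_deriv:
  assumes "edom g a" "a < x"
  shows "(tail g has_real_derivative - g x) (at x)"
proof -
  have cg: "continuous_on UNIV g" using assms(1) unfolding edom_def by blast
  have "((\<lambda>y. integral {a..y} g) has_real_derivative g x) (at x within {a..x+1})"
    by (rule integral_has_real_derivative) (use cg assms in \<open>auto intro: continuous_on_subset\<close>)
  then have "((\<lambda>y. integral {a..y} g) has_real_derivative g x) (at x)"
    using at_within_Icc_at[of a x "x+1"] assms by simp
  then have d: "((\<lambda>y. tail g a - integral {a..y} g) has_real_derivative - g x) (at x)"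
    by (intro derivative_eq_intros) auto
  show ?thesis
  proof (rule has_field_derivative_transform_within_open[OF d, where S="{a<..}"])
    fix y assume "y \<in> {a<..}"
    then show "tail g a - integral {a..y} g = tail g y" using tail_split[OF assms(1), of a y] by simp
  qed (use assms in auto)
qed

lemma tail_abs_le:
  assumes "edom g a" "edom G a" "a \<le> x" "\<And>t. t \<ge> x \<Longrightarrow> \<bar>g t\<bar> \<le> G t"
  shows "\<bar>tail g x\<bar> \<le> tail G x"
proof -
  have cg: "continuous_on UNIV g" using assms(1) unfolding edom_def by blast
  have cG: "continuous_on UNIV G" using assms(2) unfolding edom_def by blast
  have "((\<lambda>R. \<bar>integral {x..R} g\<bar>) \<longlongrightarrow> \<bar>tail g x\<bar>) at_top"
    by (intro tendsto_rabs tail_conv[OF assms(1,3)])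
  moreover have "((\<lambda>R. integral {x..R} G) \<longlongrightarrow> tail G x) at_top"
    by (intro tail_conv[OF assms(2,3)])
  moreover have "\<forall>\<^sub>F R in at_top. \<bar>integral {x..R} g\<bar> \<le> integral {x..R} G"
    unfolding eventually_at_top_linorder
  proof (rule exI[of _ x], intro allI impI)
    fix R assume "R \<ge> x"
    show "\<bar>integral {x..R} g\<bar> \<le> integral {x..R} G"
      using integral_norm_bound_integral[OF cont_integrable[OF cg] cont_integrable[OF cG], of x R] assms(4)
      by auto
  qed
  ultimately show ?thesis using tendsto_le[OF trivial_limit_at_top_linorder] by blast
qed

lemma tail_le:
  assumes "edom g a" "edom G a" "a \<le> x" "\<And>t. t \<ge> x \<Longrightarrow> g t \<le> G t"
  shows "tail g x \<le> tail G x"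
proof -
  have cg: "continuous_on UNIV g" using assms(1) unfolding edom_def by blast
  have cG: "continuous_on UNIV G" using assms(2) unfolding edom_def by blast
  have "\<forall>\<^sub>F R in at_top. integral {x..R} g \<le> integral {x..R} G"
    unfolding eventually_at_top_linorder
    by (rule exI[of _ x], intro allI impI integral_le[OF cont_integrable[OF cg] cont_integrable[OF cG]]) (use assms(4) in auto)
  with tail_conv[OF assms(1,3)] tail_conv[OF assms(2,3)] show ?thesis
    using tendsto_le[OF trivial_limit_at_top_linorder] by blast
qed

lemma tail_add:
  assumes "edom f a" "edom g a" "a \<le> x"
  shows "tail (\<lambda>t. f t + g t) x = tail f x + tail g x"
proof -
  have cf: "continuous_on UNIV f" using assms(1) unfolding edom_def by blast
  have cg: "continuous_on UNIV g" using assms(2) unfolding edom_def by blast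
  have "((\<lambda>R. integral {x..R} f + integral {x..R} g) \<longlongrightarrow> tail f x + tail g x) at_top"
    by (intro tendsto_add tail_conv[OF assms(1,3)] tail_conv[OF assms(2,3)])
  moreover have "(\<lambda>R. integral {x..R} f + integral {x..R} g) = (\<lambda>R. integral {x..R} (\<lambda>t. f t + g t))"
    using integral_add[OF cont_integrable[OF cf] cont_integrable[OF cg]] by auto
  ultimately have "((\<lambda>R. integral {x..R} (\<lambda>t. f t + g t)) \<longlongrightarrow> tail f x + tail g x) at_top" by simp
  then show ?thesis by (rule tendsto_unique[OF trivial_limit_at_top_linorder tail_conv[OF edom_add[OF assms(1,2)] assms(3)]])
qed

lemma tail_cmult:
  assumes "edom f a" "a \<le> x"
  shows "tail (\<lambda>t. C * f t) x = C * tail f x"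
proof -
  have "((\<lambda>R. C * integral {x..R} f) \<longlongrightarrow> C * tail f x) at_top"
    by (intro tendsto_mult tendsto_const tail_conv[OF assms])
  then have "((\<lambda>R. integral {x..R} (\<lambda>t. C * f t)) \<longlongrightarrow> C * tail f x) at_top" by simp
  then show ?thesis by (rule tendsto_unique[OF trivial_limit_at_top_linorder tail_conv[OF edom_cmult[OF assms(1)] assms(2)]])
qed

lemma tail_diff:
  assumes "edom f a" "edom g a" "a \<le> x"
  shows "tail (\<lambda>t. f t - g t) x = tail f x - tail g x"
  using tail_add[OF assms(1) edom_cmult[OF assms(2), of "-1"] assms(3)] tail_cmult[OF assms(2,3), of "-1"]
  by simp

lemma tail_exp:
  assumes "\<kappa> > 0"
  shows "tail (\<lambda>t. exp (-\<kappa>*t)) x = exp (-\<kappa>*x) / \<kappa>"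
proof -
  have "((\<lambda>R. (exp (-\<kappa>*x) - exp (-\<kappa>*R)) / \<kappa>) \<longlongrightarrow> (exp (-\<kappa>*x) - 0) / \<kappa>) at_top"
    using assms by (intro tendsto_intros exp_neg_lim0) auto
  moreover have "\<forall>\<^sub>F R in at_top. (exp (-\<kappa>*x) - exp (-\<kappa>*R)) / \<kappa> = integral {x..R} (\<lambda>t. exp (-\<kappa>*t))"
    unfolding eventually_at_top_linorder by (rule exI[of _ x], intro allI impI integral_exp_neg[OF assms, symmetric])
  ultimately have "((\<lambda>R. integral {x..R} (\<lambda>t. exp (-\<kappa>*t))) \<longlongrightarrow> (exp (-\<kappa>*x) - 0) / \<kappa>) at_top"
    by (rule Lim_transform_eventually)
  then have "((\<lambda>R. integral {x..R} (\<lambda>t. exp (-\<kappa>*t))) \<longlongrightarrow> exp (-\<kappa>*x) / \<kappa>) at_top" by simp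
  then show ?thesis by (rule tendsto_unique[OF trivial_limit_at_top_linorder tail_conv[OF edom_exp[OF assms, of x] order_refl]])
qed

lemma tail_lim0:
  assumes "edom g a"
  shows "(tail g \<longlongrightarrow> 0) at_top"
proof -
  obtain B k where k: "k > 0" "\<And>t. t \<ge> a \<Longrightarrow> \<bar>g t\<bar> \<le> B * exp (-k*t)"
    using assms unfolding edom_def by blast
  have e: "edom (\<lambda>t. B * exp (-k*t)) a" by (intro edom_cmult edom_exp k)
  have "\<forall>\<^sub>F x in at_top. \<bar>tail g x\<bar> \<le> B * (exp (-k*x) / k)"
    unfolding eventually_at_top_linorder
  proof (rule exI[of _ a], intro allI impI)
    fix x assume x: "x \<ge> a"
    have "\<bar>tail g x\<bar> \<le> tail (\<lambda>t. B * exp (-k*t)) x"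
      by (rule tail_abs_le[OF assms e x]) (use k x in auto)
    also have "\<dots> = B * (exp (-k*x) / k)"
      using tail_cmult[OF edom_exp[OF k(1), of x] order_refl, of B] tail_exp[OF k(1), of x] by simp
    finally show "\<bar>tail g x\<bar> \<le> B * (exp (-k*x) / k)" .
  qed
  moreover have "((\<lambda>x. B * (exp (-k*x) / k)) \<longlongrightarrow> B * (0 / k)) at_top"
    using k by (intro tendsto_intros exp_neg_lim0) auto
  ultimately have ev: "\<forall>\<^sub>F x in at_top. norm (tail g x) \<le> B * (exp (-k*x) / k)"
    and lim: "((\<lambda>x. B * (exp (-k*x) / k)) \<longlongrightarrow> 0) at_top" by auto
  show ?thesis by (rule Lim_null_comparison[OF ev lim])
qed

lemma tail_unique:
  assumes "edom g a" "\<And>x. x > a \<Longrightarrow> (S has_real_derivative - g x) (at x)" "(S \<longlongrightarrow> 0) at_top" "x > a"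
  shows "S x = tail g x"
proof -
  define D where "D = (\<lambda>y. S y - tail g y)"
  have dD: "(D has_real_derivative 0) (at y)" if "y > a" for y
    unfolding D_def using assms(2)[OF that] tail_deriv[OF assms(1) that]
    by (auto intro!: derivative_eq_intros)
  have const: "D y = D x" if "y > x" for y
    by (rule DERIV_isconst3[of a "y+1"]) (use that assms(4) dD in auto)
  have "(D \<longlongrightarrow> 0 - 0) at_top" unfolding D_def by (intro tendsto_diff assms(3) tail_lim0[OF assms(1)])
  then have lim: "(D \<longlongrightarrow> 0) at_top" by simp
  have ev: "\<forall>\<^sub>F y in at_top. D y = D x"
    unfolding eventually_at_top_linorder by (rule exI[of _ "x+1"]) (use const in auto)
  have "(D \<longlongrightarrow> D x) at_top" by (rule tendsto_eventually[OF ev])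
  then have "D x = 0" using lim tendsto_unique trivial_limit_at_top_linorder by blast
  then show ?thesis unfolding D_def by simp
qed



definition hh :: "real \<Rightarrow> real \<Rightarrow> real" where
  "hh p t = (2*p+1)*(p+1) * (1 / cosh (p*t))\<^sup>2"

definition HH :: "real \<Rightarrow> real \<Rightarrow> real" where
  "HH p x = (2*p+1)*(p+1) / p * (1 - tanh (p*x))"

lemma hh_nonneg: "p > 0 \<Longrightarrow> hh p t \<ge> 0"
  unfolding hh_def by simp

lemma hh_cont: "continuous_on UNIV (hh p)"
  unfolding hh_def by (intro continuous_intros) (auto simp: cosh_real_pos[THEN less_imp_neq, symmetric])

lemma sech_sq_bound: "(1 / cosh (y::real))\<^sup>2 \<le> 4 * exp (-2*y)"
proof -
  have c: "cosh y = (exp y + exp (-y)) / 2" by (simp add: cosh_field_def)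
  have "exp y / 2 \<le> cosh y" unfolding c by simp
  then have "(exp y / 2)\<^sup>2 \<le> (cosh y)\<^sup>2" by (intro power_mono) auto
  then have "1 / (cosh y)\<^sup>2 \<le> 1 / (exp y / 2)\<^sup>2"
    by (intro divide_left_mono) auto
  also have "1 / (exp y / 2)\<^sup>2 = 4 * exp (-2*y)"
    by (simp add: power2_eq_square exp_minus field_simps exp_add[symmetric])
  finally show ?thesis by (simp add: power_divide)
qed

lemma hh_bound: "p > 0 \<Longrightarrow> hh p t \<le> 4 * ((2*p+1)*(p+1)) * exp (-(2*p)*t)"
  unfolding hh_def using sech_sq_bound[of "p*t"]
  by (simp add: mult.assoc mult_left_mono)

lemma edom_hh_mult:
  assumes "p > 0" "continuous_on UNIV f" "\<And>t. t \<ge> a \<Longrightarrow> \<bar>f t\<bar> \<le> M"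
  shows "edom (\<lambda>t. hh p t * f t) a"
proof -
  have "edom (hh p) a"
    by (rule edomI[where \<kappa>="2*p" and B="4 * ((2*p+1)*(p+1))"]) (use assms hh_cont hh_bound hh_nonneg in auto)
  then have "edom (\<lambda>t. f t * hh p t) a" by (rule edom_mult_bdd[OF _ assms(2,3)])
  then show ?thesis by (simp add: mult.commute)
qed

lemma HH_deriv: "p > 0 \<Longrightarrow> (HH p has_real_derivative - hh p x) (at x)"
  unfolding HH_def hh_def
  apply (rule derivative_eq_intros refl | simp)+
  apply (simp add: tanh_def power_divide field_simps)
  using cosh_square_eq[of "p*x"] by (simp add: algebra_simps)

lemma HH_nonneg: "p > 0 \<Longrightarrow> HH p x \<ge> 0"
  unfolding HH_def using tanh_real_lt_1[of "p*x"] by simp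

lemma HH_le: "p > 0 \<Longrightarrow> HH p x \<le> 2 * ((2*p+1)*(p+1)) / p"
proof -
  assume p: "p > 0"
  have "1 - tanh (p*x) \<le> 2" using tanh_real_gt_neg1[of "p*x"] by simp
  then have "(2*p+1)*(p+1) / p * (1 - tanh (p*x)) \<le> (2*p+1)*(p+1) / p * 2"
    by (rule mult_left_mono) (use p in simp)
  then show ?thesis unfolding HH_def by simp
qed

lemma HH_lim: "p > 0 \<Longrightarrow> (HH p \<longlongrightarrow> 0) at_top"
proof -
  assume p: "p > 0"
  have "((\<lambda>x. tanh (p*x)) \<longlongrightarrow> 1) at_top"
    by (rule filterlim_compose[OF tanh_real_at_top filterlim_tendsto_pos_mult_at_top[OF tendsto_const p filterlim_ident]])
  then have "((\<lambda>x. (2*p+1)*(p+1) / p * (1 - tanh (p*x))) \<longlongrightarrow> (2*p+1)*(p+1) / p * (1 - 1)) at_top"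
    by (intro tendsto_intros)
  then show ?thesis unfolding HH_def by simp
qed

lemma tail_hh:
  assumes "p > 0"
  shows "tail (hh p) x = HH p x"
proof -
  have e: "edom (hh p) (x-1)" using edom_hh_mult[OF assms, where f="\<lambda>_. 1" and a="x-1" and M=1] by simp
  show ?thesis
    by (rule tail_unique[OF e _ HH_lim[OF assms], symmetric]) (use HH_deriv[OF assms] in auto)
qed

lemma edom_zero: "edom (\<lambda>t. 0) a"
  unfolding edom_def by (auto intro!: exI[of _ 0] exI[of _ 1])

lemma tail_nonneg:
  assumes "edom g a" "a \<le> x" "\<And>t. t \<ge> x \<Longrightarrow> g t \<ge> 0"
  shows "tail g x \<ge> 0"
proof -
  have "tail (\<lambda>t. 0) x \<le> tail g x" by (rule tail_le[OF edom_zero assms(1,2)]) (use assms(3) in auto)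
  moreover have "tail (\<lambda>t. 0) x = 0" using tail_cmult[OF assms(1,2), of 0] by simp
  ultimately show ?thesis by simp
qed

lemma tail_antimono:
  assumes "edom g a" "a \<le> x" "x \<le> y" "\<And>t. t \<ge> x \<Longrightarrow> g t \<ge> 0"
  shows "tail g y \<le> tail g x"
proof -
  have cg: "continuous_on UNIV g" using assms(1) unfolding edom_def by blast
  have "integral {x..y} g \<ge> 0" by (rule integral_nonneg[OF cont_integrable[OF cg]]) (use assms(4) in auto)
  then show ?thesis using tail_split[OF assms(1-3)] by simp
qed

lemma tail_hh_mult_bound:
  assumes "p > 0" "continuous_on UNIV f" "\<And>t. t \<ge> x \<Longrightarrow> \<bar>f t\<bar> \<le> M"
  shows "\<bar>tail (\<lambda>t. hh p t * f t) x\<bar> \<le> M * HH p x"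
proof -
  have e1: "edom (\<lambda>t. hh p t * f t) x" by (rule edom_hh_mult[OF assms])
  have e2: "edom (\<lambda>t. M * hh p t) x" using edom_hh_mult[OF assms(1), of "\<lambda>_. M" x "\<bar>M\<bar>"] by (simp add: mult.commute)
  have "\<bar>tail (\<lambda>t. hh p t * f t) x\<bar> \<le> tail (\<lambda>t. M * hh p t) x"
  proof (rule tail_abs_le[OF e1 e2 order_refl])
    fix t assume "t \<ge> x"
    have "\<bar>f t\<bar> * hh p t \<le> M * hh p t"
      by (rule mult_right_mono[OF assms(3)[OF \<open>t \<ge> x\<close>] hh_nonneg[OF assms(1)]])
    then show "\<bar>hh p t * f t\<bar> \<le> M * hh p t" using hh_nonneg[OF assms(1), of t]
      by (simp add: abs_mult mult.commute)
  qed
  also have "\<dots> = M * HH p x"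
    using tail_cmult[of "hh p" x x M] edom_hh_mult[OF assms(1), where f="\<lambda>_. 1" and a=x and M=1] tail_hh[OF assms(1)] by simp
  finally show ?thesis .
qed

lemma gronwall_tail:
  fixes \<phi> :: "real \<Rightarrow> real"
  assumes p: "p > 0" and c\<phi>: "continuous_on UNIV \<phi>" and nn: "\<And>t. \<phi> t \<ge> 0"
    and bd: "\<And>a. \<exists>M. \<forall>t\<ge>a. \<phi> t \<le> M"
    and A: "A \<ge> 0" and g: "\<gamma> \<ge> 0"
    and ineq: "\<And>x. \<phi> x \<le> A + \<gamma> * tail (\<lambda>t. hh p t * \<phi> t) x"
  shows "\<phi> x \<le> A * exp (\<gamma> * HH p x)"
proof -
  define a where "a = x - 1"
  obtain M where M: "\<And>t. t \<ge> a \<Longrightarrow> \<phi> t \<le> M" using bd by blast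
  have e: "edom (\<lambda>t. hh p t * \<phi> t) a" by (rule edom_hh_mult[OF p c\<phi>, of a M]) (use M nn in auto)
  define \<Psi> where "\<Psi> = (\<lambda>y. A + \<gamma> * tail (\<lambda>t. hh p t * \<phi> t) y)"
  define F where "F = (\<lambda>y. \<Psi> y * exp (- \<gamma> * HH p y))"
  have dF: "(F has_real_derivative \<gamma> * hh p y * (\<Psi> y - \<phi> y) * exp (- \<gamma> * HH p y)) (at y)" if "y > a" for y
    unfolding F_def \<Psi>_def
    by (rule derivative_eq_intros tail_deriv[OF e that] HH_deriv[OF p] refl | simp)+ (simp add: algebra_simps)
  have dnn: "\<gamma> * hh p y * (\<Psi> y - \<phi> y) * exp (- \<gamma> * HH p y) \<ge> 0" for y
    using ineq[of y] g hh_nonneg[OF p, of y] unfolding \<Psi>_def by simp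
  have mono: "F x \<le> F y" if "y \<ge> x" for y
    by (rule DERIV_nonneg_imp_nondecreasing[OF that]) (use dF dnn a_def in \<open>force\<close>)
  have "(F \<longlongrightarrow> (A + \<gamma> * 0) * exp (- \<gamma> * 0)) at_top"
    unfolding F_def \<Psi>_def by (intro tendsto_intros tail_lim0[OF e] HH_lim[OF p])
  then have lim: "(F \<longlongrightarrow> A) at_top" by simp
  have "F x \<le> A"
    by (rule tendsto_le[OF trivial_limit_at_top_linorder lim tendsto_const])
       (auto simp: eventually_at_top_linorder intro!: exI[of _ x] mono)
  then have "\<Psi> x \<le> A * exp (\<gamma> * HH p x)"
    unfolding F_def by (simp add: exp_minus field_simps)
  then show ?thesis using ineq[of x] unfolding \<Psi>_def by simp
qed



definition kk :: "real \<Rightarrow> real" where "kk lam = sqrt (1 - lam)"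
definition UU :: "(real \<Rightarrow> real) \<Rightarrow> real \<Rightarrow> real \<Rightarrow> real" where
  "UU V lam x = V x * exp (kk lam * x)"
definition UD :: "(real \<Rightarrow> real) \<Rightarrow> real \<Rightarrow> real \<Rightarrow> real" where
  "UD V lam x = (deriv V x + kk lam * V x) * exp (kk lam * x)"
definition PHI :: "real \<Rightarrow> (real \<Rightarrow> real) \<Rightarrow> real \<Rightarrow> real \<Rightarrow> real" where
  "PHI p V lam x = tail (\<lambda>t. hh p t * UU V lam t) x"

lemma aux_lin: "l + q = 1 \<Longrightarrow> (A::real) = l*A + q*A"
  by (metis distrib_right mult_1)

locale jost =
  fixes p lam :: real and V :: "real \<Rightarrow> real"
  assumes p: "p > 0" and lam: "lam < 1" and sol: "is_sol p lam V"
begin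

abbreviation "k \<equiv> kk lam"
abbreviation "U \<equiv> UU V lam"
abbreviation "Ud \<equiv> UD V lam"
abbreviation "\<Phi> \<equiv> PHI p V lam"

lemma kpos: "k > 0" unfolding kk_def using lam by simp
lemma ksq: "k\<^sup>2 = 1 - lam" unfolding kk_def using lam by simp

lemma dV: "(V has_real_derivative deriv V x) (at x)"
  and dD: "(deriv V has_real_derivative ((1 - lam) * V x - hh p x * V x)) (at x)"
proof -
  obtain v' where v: "\<And>x. (V has_real_derivative v' x) (at x)"
    "\<And>x. (v' has_real_derivative ((1 - lam) * V x - (2 * p + 1) * (p + 1) * (1 / cosh (p * x))\<^sup>2 * V x)) (at x)"
    using sol unfolding is_sol_def by blast
  have e: "deriv V = v'" using v(1) DERIV_imp_deriv by blast
  show "(V has_real_derivative deriv V x) (at x)" using v(1) e by simp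
  show "(deriv V has_real_derivative ((1 - lam) * V x - hh p x * V x)) (at x)"
    using v(2)[of x] e unfolding hh_def by (simp add: mult.assoc)
qed

lemma Vlim: "((\<lambda>x. V x * exp (k * x)) \<longlongrightarrow> 1) at_top"
  using sol unfolding is_sol_def kk_def by blast

lemma contV: "continuous_on UNIV V"
  using dV by (meson DERIV_isCont continuous_at_imp_continuous_on)

lemma contD: "continuous_on UNIV (deriv V)"
  using dD by (meson DERIV_isCont continuous_at_imp_continuous_on)

lemma dU: "(U has_real_derivative Ud x) (at x)"
  unfolding UU_def UD_def
  by (rule derivative_eq_intros dV refl | simp)+ (simp add: algebra_simps)

lemma dUd: "(Ud has_real_derivative (2*k*Ud x - hh p x * U x)) (at x)"
  unfolding UU_def UD_def
  apply (rule derivative_eq_intros dV dD refl | simp)+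
  using aux_lin[of lam "k*k" "V x * exp (x*k)"] ksq by (simp add: power2_eq_square algebra_simps)

lemma contU: "continuous_on UNIV U"
  using dU by (meson DERIV_isCont continuous_at_imp_continuous_on)

lemma contUd: "continuous_on UNIV Ud"
  using dUd by (meson DERIV_isCont continuous_at_imp_continuous_on)

lemma Ulim: "(U \<longlongrightarrow> 1) at_top"
  using Vlim unfolding UU_def .

lemma Ubdd: "\<exists>M. \<forall>t\<ge>a. \<bar>U t\<bar> \<le> M"
proof -
  have "\<forall>\<^sub>F t in at_top. dist (U t) 1 < 1" using tendstoD[OF Ulim, of 1] by simp
  then obtain R where R: "\<And>t. t \<ge> R \<Longrightarrow> dist (U t) 1 < 1" unfolding eventually_at_top_linorder by blast
  have "compact ((\<lambda>t. \<bar>U t\<bar>) ` {a..R})"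
    by (rule compact_continuous_image) (use contU in \<open>auto intro!: continuous_intros intro: continuous_on_subset\<close>)
  then obtain M1 where M1: "\<And>t. t \<in> {a..R} \<Longrightarrow> \<bar>U t\<bar> \<le> M1"
    using compact_imp_bounded[THEN bounded_real[THEN iffD1]] by fastforce
  have "\<bar>U t\<bar> \<le> max M1 2" if "t \<ge> a" for t
  proof (cases "t \<le> R")
    case True then show ?thesis using M1[of t] that by auto
  next
    case False then have "dist (U t) 1 < 1" using R by auto
    then show ?thesis by (auto simp: dist_real_def)
  qed
  then show ?thesis by blast
qed

lemma eU: "edom (\<lambda>t. hh p t * U t) a"
  using Ubdd[of a] edom_hh_mult[OF p contU] by blast

lemma eUabs: "edom (\<lambda>t. hh p t * \<bar>U t\<bar>) a"
  using Ubdd[of a] edom_hh_mult[OF p, of "\<lambda>t. \<bar>U t\<bar>"] contU by (auto intro: continuous_intros)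

lemma dPhi: "(\<Phi> has_real_derivative - (hh p x * U x)) (at x)"
  unfolding PHI_def by (rule tail_deriv[OF eU[of "x-1"]]) simp

lemma Philim: "(\<Phi> \<longlongrightarrow> 0) at_top"
  unfolding PHI_def by (rule tail_lim0[OF eU])

lemma contPhi: "continuous_on UNIV \<Phi>"
  using dPhi by (meson DERIV_isCont continuous_at_imp_continuous_on)

lemma Phi_abs: "\<bar>\<Phi> x\<bar> \<le> tail (\<lambda>t. hh p t * \<bar>U t\<bar>) x"
  unfolding PHI_def
  by (rule tail_abs_le[OF eU eUabs order_refl]) (use hh_nonneg[OF p] in \<open>auto simp: abs_mult\<close>)

lemma Ud_eq: "Ud x = 2*k*(U x - 1) + \<Phi> x"
proof -
  define G where "G = (\<lambda>y. U y - Ud y * (1 / (2*k)) + \<Phi> y * (1 / (2*k)))"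
  have dG: "(G has_real_derivative 0) (at y)" for y
    unfolding G_def
    by (rule derivative_eq_intros dU dUd dPhi refl | simp)+ (use kpos in \<open>simp add: field_simps\<close>)
  define C where "C = G 0"
  have GC: "G y = C" for y unfolding C_def using DERIV_isconst_all dG by blast
  have UdC: "Ud y = 2*k*(U y - C) + \<Phi> y" for y
    using GC[of y] kpos unfolding G_def by (simp add: field_simps)
  define l where "l = 2*k*(1 - C)"
  have Udlim: "(Ud \<longlongrightarrow> l) at_top"
  proof -
    have "((\<lambda>y. 2*k*(U y - C) + \<Phi> y) \<longlongrightarrow> 2*k*(1 - C) + 0) at_top"
      by (intro tendsto_intros Ulim Philim)
    moreover have e: "Ud = (\<lambda>y. 2*k*(U y - C) + \<Phi> y)" by (rule ext) (rule UdC)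
    ultimately show ?thesis unfolding l_def by simp
  qed
  have "l = 0"
  proof (rule ccontr)
    assume l0: "l \<noteq> 0"
    have "\<forall>\<^sub>F y in at_top. dist (Ud y) l < \<bar>l\<bar>/2" using tendstoD[OF Udlim, of "\<bar>l\<bar>/2"] l0 by simp
    then obtain X where X: "\<And>y. y \<ge> X \<Longrightarrow> dist (Ud y) l < \<bar>l\<bar>/2" unfolding eventually_at_top_linorder by blast
    obtain M where M: "\<And>t. t \<ge> X \<Longrightarrow> \<bar>U t\<bar> \<le> M" using Ubdd by blast
    have M0: "M \<ge> 0" using M[of X] by simp
    define y where "y = X + 4*M/\<bar>l\<bar> + 1"
    have "4*M/\<bar>l\<bar> \<ge> 0" using M0 by simp
    then have Xy: "X < y" unfolding y_def by linarith
    obtain z where z: "X < z" "z < y" "U y - U X = (y - X) * Ud z"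
      using MVT2[OF Xy, of U Ud] dU by blast
    have d: "\<bar>Ud z - l\<bar> < \<bar>l\<bar>/2" using X[of z] z(1) by (auto simp: dist_real_def)
    have t: "\<bar>l\<bar> \<le> \<bar>Ud z\<bar> + \<bar>Ud z - l\<bar>" using abs_triangle_ineq[of "Ud z" "l - Ud z"] abs_minus_commute[of l "Ud z"] by simp
    have "\<bar>Ud z\<bar> > \<bar>l\<bar>/2" using d t by linarith
    then have "\<bar>U y - U X\<bar> \<ge> (y - X) * (\<bar>l\<bar>/2)" using z Xy by (simp add: abs_mult mult_left_mono less_imp_le)
    moreover have "(y - X) * (\<bar>l\<bar>/2) = 2*M + \<bar>l\<bar>/2" unfolding y_def using l0 by (simp add: field_simps)
    moreover have "\<bar>U y - U X\<bar> \<le> 2*M" using M[of y] M[of X] Xy by simp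
    moreover have "\<bar>l\<bar> > 0" using l0 by simp
    ultimately show False by linarith
  qed
  then have "C = 1" unfolding l_def using kpos by simp
  then show ?thesis using UdC by simp
qed

lemma Phi_bdd: "\<exists>M. \<forall>t\<ge>a. \<bar>\<Phi> t\<bar> \<le> M"
proof -
  obtain M where M: "\<And>t. t \<ge> a \<Longrightarrow> \<bar>U t\<bar> \<le> M" using Ubdd by blast
  have "\<bar>\<Phi> t\<bar> \<le> M * (2 * ((2*p+1)*(p+1)) / p)" if "t \<ge> a" for t
  proof -
    have "\<bar>\<Phi> t\<bar> \<le> M * HH p t" unfolding PHI_def
      by (rule tail_hh_mult_bound[OF p contU]) (use M that in auto)
    also have "\<dots> \<le> M * (2 * ((2*p+1)*(p+1)) / p)"
      using M[of a] HH_le[OF p, of t] by (intro mult_left_mono) auto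
    finally show ?thesis .
  qed
  then show ?thesis by blast
qed

lemma eg: "edom (\<lambda>t. C * (exp (-(2*k)*t) * \<Phi> t)) a"
proof -
  obtain M where M: "\<And>t. t \<ge> a \<Longrightarrow> \<bar>\<Phi> t\<bar> \<le> M" using Phi_bdd by blast
  have "edom (\<lambda>t. \<Phi> t * exp (-(2*k)*t)) a"
    by (rule edom_mult_bdd[OF edom_exp contPhi M]) (use kpos in auto)
  then show ?thesis by (intro edom_cmult) (simp add: mult.commute)
qed

lemma U_rep: "U x - 1 = - tail (\<lambda>t. exp (2*k*x) * (exp (-(2*k)*t) * \<Phi> t)) x"
proof -
  define S where "S = (\<lambda>y. - (exp (-(2*k)*y) * (U y - 1)))"
  have e1: "edom (\<lambda>t. 1 * (exp (-(2*k)*t) * \<Phi> t)) (x-1)" by (rule eg)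
  have "S x = tail (\<lambda>t. 1 * (exp (-(2*k)*t) * \<Phi> t)) x"
  proof (rule tail_unique[OF e1])
    fix y
    show "(S has_real_derivative - (1 * (exp (-(2*k)*y) * \<Phi> y))) (at y)"
      unfolding S_def
      by (rule derivative_eq_intros dU refl | simp)+ (simp add: Ud_eq algebra_simps)
  next
    have "((\<lambda>y. - (exp (-(2*k)*y) * (U y - 1))) \<longlongrightarrow> - (0 * (1 - 1))) at_top"
      using kpos by (intro tendsto_intros exp_neg_lim0 Ulim) auto
    then show "(S \<longlongrightarrow> 0) at_top" unfolding S_def by simp
  qed simp
  then have "U x - 1 = - exp (2*k*x) * tail (\<lambda>t. 1 * (exp (-(2*k)*t) * \<Phi> t)) x"
    unfolding S_def by (simp add: exp_minus field_simps exp_add[symmetric])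
  also have "\<dots> = - tail (\<lambda>t. exp (2*k*x) * (1 * (exp (-(2*k)*t) * \<Phi> t))) x"
    using tail_cmult[OF eg[of 1 x] order_refl, of "exp (2*k*x)"] by simp
  finally show ?thesis by simp
qed

lemma U_apriori: "\<bar>U x\<bar> \<le> 1 + tail (\<lambda>t. hh p t * \<bar>U t\<bar>) x / (2*k)"
proof -
  define \<Psi> where "\<Psi> = tail (\<lambda>t. hh p t * \<bar>U t\<bar>)"
  have Pt: "\<bar>\<Phi> t\<bar> \<le> \<Psi> x" if "t \<ge> x" for t
  proof -
    have "\<bar>\<Phi> t\<bar> \<le> \<Psi> t" unfolding \<Psi>_def by (rule Phi_abs)
    also have "\<Psi> t \<le> \<Psi> x" unfolding \<Psi>_def
      by (rule tail_antimono[OF eUabs order_refl that]) (use hh_nonneg[OF p] in auto)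
    finally show ?thesis .
  qed
  have e2: "edom (\<lambda>t. (\<Psi> x * exp (2*k*x)) * exp (-(2*k)*t)) x"
    by (intro edom_cmult edom_exp) (use kpos in auto)
  have "\<bar>tail (\<lambda>t. exp (2*k*x) * (exp (-(2*k)*t) * \<Phi> t)) x\<bar> \<le> tail (\<lambda>t. (\<Psi> x * exp (2*k*x)) * exp (-(2*k)*t)) x"
  proof (rule tail_abs_le[OF eg e2 order_refl])
    fix t assume "t \<ge> x"
    then have "\<bar>\<Phi> t\<bar> * (exp (2*k*x) * exp (-(2*k)*t)) \<le> \<Psi> x * (exp (2*k*x) * exp (-(2*k)*t))"
      using Pt by (intro mult_right_mono) auto
    then show "\<bar>exp (2*k*x) * (exp (-(2*k)*t) * \<Phi> t)\<bar> \<le> \<Psi> x * exp (2*k*x) * exp (-(2*k)*t)"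
      by (simp add: abs_mult algebra_simps)
  qed
  also have "\<dots> = (\<Psi> x * exp (2*k*x)) * (exp (-(2*k)*x) / (2*k))"
  proof -
    have ee: "edom (\<lambda>t. exp (-(2*k)*t)) x" by (rule edom_exp) (use kpos in simp)
    show ?thesis using tail_cmult[OF ee order_refl, where C="\<Psi> x * exp (2*k*x)"] tail_exp[of "2*k" x] kpos by simp
  qed
  also have "\<dots> = \<Psi> x / (2*k)" using kpos by (simp add: field_simps exp_add[symmetric])
  finally have "\<bar>U x - 1\<bar> \<le> \<Psi> x / (2*k)" using U_rep[of x] by simp
  then show ?thesis unfolding \<Psi>_def by simp
qed

definition "Mb = exp ((2*p+1)*(p+1) / (p * k))"

lemma U_bound: "\<bar>U x\<bar> \<le> Mb"
proof -
  have "\<bar>U x\<bar> \<le> 1 * exp (1/(2*k) * HH p x)"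
  proof (rule gronwall_tail[OF p])
    show "continuous_on UNIV (\<lambda>t. \<bar>U t\<bar>)" using contU by (intro continuous_intros)
    show "\<exists>M. \<forall>t\<ge>a. \<bar>U t\<bar> \<le> M" for a by (rule Ubdd)
    show "\<bar>U y\<bar> \<le> 1 + 1 / (2 * k) * tail (\<lambda>t. hh p t * \<bar>U t\<bar>) y" for y using U_apriori[of y] by simp
  qed (use kpos in auto)
  also have "\<dots> \<le> Mb" unfolding Mb_def
    using HH_le[OF p, of x] kpos p by (simp add: field_simps)
  finally show ?thesis .
qed

lemma Phi_bound: "\<bar>\<Phi> x\<bar> \<le> Mb * (2 * ((2*p+1)*(p+1)) / p)"
proof -
  have "\<bar>\<Phi> x\<bar> \<le> Mb * HH p x" unfolding PHI_def
    by (rule tail_hh_mult_bound[OF p contU]) (use U_bound in auto)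
  also have "\<dots> \<le> Mb * (2 * ((2*p+1)*(p+1)) / p)"
    using HH_le[OF p, of x] by (intro mult_left_mono) (auto simp: Mb_def)
  finally show ?thesis .
qed

lemma V_eq: "V x = exp (-k*x) * U x"
  unfolding UU_def by (simp add: exp_minus field_simps)

lemma D_eq: "deriv V x = exp (-k*x) * (2*k*(U x - 1) + \<Phi> x - k * U x)"
proof -
  have "Ud x = (deriv V x + k * V x) * exp (k*x)" unfolding UD_def ..
  then have "deriv V x = exp (-k*x) * Ud x - k * V x" by (simp add: exp_minus field_simps)
  then show ?thesis using Ud_eq[of x] V_eq[of x] by (simp add: algebra_simps)
qed

end



definition cc :: "real \<Rightarrow> real" where "cc p = 2 * ((2*p+1)*(p+1)) / p"

lemma exp_diff_sign:
  fixes k m x t :: real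
  assumes "0 < k" "k \<le> m" "x \<le> t"
  shows "exp (2*m*x) * exp (-(2*m)*t) \<le> exp (2*k*x) * exp (-(2*k)*t)"
proof -
  have "2*m*x + -(2*m)*t \<le> 2*k*x + -(2*k)*t"
    using mult_right_mono[OF assms(2), of "t - x"] assms(3) by (simp add: algebra_simps)
  then show ?thesis by (simp add: exp_add[symmetric])
qed

lemma tail_expdiff:
  fixes k m x :: real
  assumes "0 < k" "k \<le> m"
  shows "tail (\<lambda>t. exp (2*k*x) * exp (-(2*k)*t) - exp (2*m*x) * exp (-(2*m)*t)) x = 1/(2*k) - 1/(2*m)"
proof -
  have m: "m > 0" using assms by simp
  have e1: "edom (\<lambda>t. exp (2*k*x) * exp (-(2*k)*t)) x" by (intro edom_cmult edom_exp) (use assms in simp)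
  have e2: "edom (\<lambda>t. exp (2*m*x) * exp (-(2*m)*t)) x" by (intro edom_cmult edom_exp) (use m in simp)
  have ek: "edom (\<lambda>t. exp (-(2*k)*t)) x" by (intro edom_exp) (use assms in simp)
  have em: "edom (\<lambda>t. exp (-(2*m)*t)) x" by (intro edom_exp) (use m in simp)
  have "tail (\<lambda>t. exp (2*k*x) * exp (-(2*k)*t)) x = 1/(2*k)"
    using tail_cmult[OF ek order_refl, where C="exp (2*k*x)"] tail_exp[of "2*k" x] assms
    by (simp add: exp_add[symmetric])
  moreover have "tail (\<lambda>t. exp (2*m*x) * exp (-(2*m)*t)) x = 1/(2*m)"
    using tail_cmult[OF em order_refl, where C="exp (2*m*x)"] tail_exp[of "2*m" x] m
    by (simp add: exp_add[symmetric])
  ultimately show ?thesis using tail_diff[OF e1 e2 order_refl] by simp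
qed

context
  fixes p lam mu :: real and V W :: "real \<Rightarrow> real"
  assumes J1: "jost p lam V" and J2: "jost p mu W"
begin

private abbreviation "k \<equiv> kk lam"
private abbreviation "m \<equiv> kk mu"
private abbreviation "u \<equiv> UU V lam"
private abbreviation "w \<equiv> UU W mu"
private abbreviation "\<Phi>1 \<equiv> PHI p V lam"
private abbreviation "\<Phi>2 \<equiv> PHI p W mu"

lemma U_diff:
  "\<bar>u x - w x\<bar> \<le> jost.Mb p mu * cc p * \<bar>1/(2*k) - 1/(2*m)\<bar> * exp (1/(2*k) * HH p x)"
proof -
  have p: "p > 0" using J1 jost.p by blast
  have kpos: "k > 0" using jost.kpos[OF J1] .
  have mpos: "m > 0" using jost.kpos[OF J2] .
  define B2 where "B2 = jost.Mb p mu * cc p"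
  have Mb2: "jost.Mb p mu \<ge> 0" by (simp add: jost.Mb_def[OF J2])
  have B2: "B2 \<ge> 0" unfolding B2_def cc_def using Mb2 p by simp
  have Phi2b: "\<bar>\<Phi>2 t\<bar> \<le> B2" for t using jost.Phi_bound[OF J2, of t] unfolding B2_def cc_def by simp
  have cu: "continuous_on UNIV u" by (rule jost.contU[OF J1])
  have cw: "continuous_on UNIV w" by (rule jost.contU[OF J2])
  define \<phi> where "\<phi> = (\<lambda>t. \<bar>u t - w t\<bar>)"
  have c\<phi>: "continuous_on UNIV \<phi>" unfolding \<phi>_def using cu cw by (intro continuous_intros)
  have \<phi>b: "\<phi> t \<le> jost.Mb p lam + jost.Mb p mu" for t
    unfolding \<phi>_def using jost.U_bound[OF J1, of t] jost.U_bound[OF J2, of t] by linarith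
  have eh: "edom (\<lambda>t. hh p t * \<phi> t) a" for a
    by (rule edom_hh_mult[OF p c\<phi>, where M="jost.Mb p lam + jost.Mb p mu"]) (use \<phi>b in \<open>auto simp: \<phi>_def\<close>)
  have ineq: "\<phi> x \<le> B2 * \<bar>1/(2*k) - 1/(2*m)\<bar> + 1/(2*k) * tail (\<lambda>t. hh p t * \<phi> t) x" for x
  proof -
    define \<Delta> where "\<Delta> = tail (\<lambda>t. hh p t * \<phi> t) x"
    have Pd: "\<bar>\<Phi>1 t - \<Phi>2 t\<bar> \<le> \<Delta>" if "t \<ge> x" for t
    proof -
      have "\<Phi>1 t - \<Phi>2 t = tail (\<lambda>s. hh p s * u s - hh p s * w s) t"
        unfolding PHI_def by (rule tail_diff[OF jost.eU[OF J1] jost.eU[OF J2] order_refl, symmetric])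
      also have "\<bar>\<dots>\<bar> \<le> tail (\<lambda>t. hh p t * \<phi> t) t"
        by (rule tail_abs_le[OF edom_diff[OF jost.eU[OF J1] jost.eU[OF J2]] eh order_refl])
           (use hh_nonneg[OF p] in \<open>auto simp: \<phi>_def abs_mult right_diff_distrib[symmetric]\<close>)
      also have "\<dots> \<le> \<Delta>" unfolding \<Delta>_def
        by (rule tail_antimono[OF eh order_refl that]) (use hh_nonneg[OF p] in \<open>auto simp: \<phi>_def\<close>)
      finally show ?thesis .
    qed
    define f1 where "f1 = (\<lambda>t. exp (2*k*x) * (exp (-(2*k)*t) * \<Phi>1 t))"
    define f2 where "f2 = (\<lambda>t. exp (2*m*x) * (exp (-(2*m)*t) * \<Phi>2 t))"
    have ef1: "edom f1 x" unfolding f1_def by (rule jost.eg[OF J1])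
    have ef2: "edom f2 x" unfolding f2_def by (rule jost.eg[OF J2])
    have "u x - w x = - (tail f1 x - tail f2 x)"
      using jost.U_rep[OF J1, of x] jost.U_rep[OF J2, of x] unfolding f1_def f2_def by simp
    also have "\<dots> = - tail (\<lambda>t. f1 t - f2 t) x" using tail_diff[OF ef1 ef2 order_refl] by simp
    finally have uw: "\<phi> x = \<bar>tail (\<lambda>t. f1 t - f2 t) x\<bar>" unfolding \<phi>_def by simp
    define E where "E = (\<lambda>t. if k \<le> m then exp (2*k*x) * exp (-(2*k)*t) - exp (2*m*x) * exp (-(2*m)*t)
                              else exp (2*m*x) * exp (-(2*m)*t) - exp (2*k*x) * exp (-(2*k)*t))"
    have ek: "edom (\<lambda>t. exp (-(2*k)*t)) x" by (intro edom_exp) (use kpos in simp)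
    have em: "edom (\<lambda>t. exp (-(2*m)*t)) x" by (intro edom_exp) (use mpos in simp)
    have eE: "edom E x"
    proof (cases "k \<le> m")
      case True
      then have "E = (\<lambda>t. exp (2*k*x) * exp (-(2*k)*t) - exp (2*m*x) * exp (-(2*m)*t))" unfolding E_def by simp
      then show ?thesis using edom_diff[OF edom_cmult[OF ek] edom_cmult[OF em]] by simp
    next
      case False
      then have "E = (\<lambda>t. exp (2*m*x) * exp (-(2*m)*t) - exp (2*k*x) * exp (-(2*k)*t))" unfolding E_def by simp
      then show ?thesis using edom_diff[OF edom_cmult[OF em] edom_cmult[OF ek]] by simp
    qed
    have Enn: "\<bar>exp (2*k*x) * exp (-(2*k)*t) - exp (2*m*x) * exp (-(2*m)*t)\<bar> \<le> E t" if "t \<ge> x" for t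
      using exp_diff_sign[OF kpos _ that, of m] exp_diff_sign[OF mpos _ that, of k] unfolding E_def
      by (cases "k \<le> m") auto
    have tE: "tail E x = \<bar>1/(2*k) - 1/(2*m)\<bar>"
    proof (cases "k \<le> m")
      case True
      then have "tail E x = 1/(2*k) - 1/(2*m)" unfolding E_def using tail_expdiff[OF kpos True, of x] by simp
      moreover have "1/(2*k) \<ge> 1/(2*m)" using True kpos by (simp add: frac_le)
      ultimately show ?thesis by simp
    next
      case False
      then have "tail E x = 1/(2*m) - 1/(2*k)" unfolding E_def using tail_expdiff[OF mpos, of k x] by simp
      moreover have "1/(2*m) \<ge> 1/(2*k)" using False mpos by (simp add: frac_le)
      ultimately show ?thesis by simp
    qed
    define G where "G = (\<lambda>t. (\<Delta> * exp (2*k*x)) * exp (-(2*k)*t) + B2 * E t)"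
    have eG: "edom G x" unfolding G_def
      by (intro edom_add edom_cmult edom_exp eE) (use kpos in simp)
    have "\<bar>tail (\<lambda>t. f1 t - f2 t) x\<bar> \<le> tail G x"
    proof (rule tail_abs_le[OF edom_diff[OF ef1 ef2] eG order_refl])
      fix t assume t: "t \<ge> x"
      have "f1 t - f2 t = exp (2*k*x) * exp (-(2*k)*t) * (\<Phi>1 t - \<Phi>2 t)
          + (exp (2*k*x) * exp (-(2*k)*t) - exp (2*m*x) * exp (-(2*m)*t)) * \<Phi>2 t"
        unfolding f1_def f2_def by (simp add: algebra_simps)
      also have "\<bar>\<dots>\<bar> \<le> exp (2*k*x) * exp (-(2*k)*t) * \<Delta> + E t * B2"
      proof (rule order_trans[OF abs_triangle_ineq add_mono])
        show "\<bar>exp (2*k*x) * exp (-(2*k)*t) * (\<Phi>1 t - \<Phi>2 t)\<bar> \<le> exp (2*k*x) * exp (-(2*k)*t) * \<Delta>"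
          using Pd[OF t] by (simp add: abs_mult)
        show "\<bar>(exp (2*k*x) * exp (-(2*k)*t) - exp (2*m*x) * exp (-(2*m)*t)) * \<Phi>2 t\<bar> \<le> E t * B2"
          unfolding abs_mult by (rule mult_mono[OF Enn[OF t] Phi2b]) (use Enn[OF t] in auto)
      qed
      finally show "\<bar>f1 t - f2 t\<bar> \<le> G t" unfolding G_def by (simp add: algebra_simps)
    qed
    also have "tail G x = \<Delta> / (2*k) + B2 * \<bar>1/(2*k) - 1/(2*m)\<bar>"
    proof -
      have ek: "edom (\<lambda>t. exp (-(2*k)*t)) x" by (intro edom_exp) (use kpos in simp)
      have "tail G x = tail (\<lambda>t. (\<Delta> * exp (2*k*x)) * exp (-(2*k)*t)) x + tail (\<lambda>t. B2 * E t) x"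
        unfolding G_def by (rule tail_add[OF edom_cmult[OF ek] edom_cmult[OF eE] order_refl])
      also have "\<dots> = (\<Delta> * exp (2*k*x)) * (exp (-(2*k)*x) / (2*k)) + B2 * tail E x"
        using tail_cmult[OF ek order_refl] tail_cmult[OF eE order_refl] tail_exp[of "2*k" x] kpos by simp
      finally show ?thesis using tE kpos by (simp add: exp_add[symmetric] field_simps)
    qed
    finally show ?thesis unfolding uw \<Delta>_def by simp
  qed
  have "\<phi> x \<le> (B2 * \<bar>1/(2*k) - 1/(2*m)\<bar>) * exp (1/(2*k) * HH p x)"
  proof (rule gronwall_tail[OF p c\<phi>])
    show "\<exists>M. \<forall>t\<ge>a. \<phi> t \<le> M" for a using \<phi>b by blast
  qed (use ineq B2 kpos in \<open>auto simp: \<phi>_def\<close>)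
  then show ?thesis unfolding \<phi>_def B2_def by simp
qed

end



lemma t_exp_bound:
  fixes z t a k1 k2 :: real
  assumes "0 < k1" "k1 \<le> z" "z \<le> k2" "a \<le> t"
  shows "\<bar>t * exp (-z*t)\<bar> \<le> 1/k1 + \<bar>a\<bar> * exp (k2 * \<bar>a\<bar>)"
proof (cases "t \<ge> 0")
  case True
  have "exp (k1*t) \<ge> 1 + k1*t" by (rule exp_ge_add_one_self)
  then have "k1 * t \<le> exp (k1*t)" by linarith
  then have "t \<le> exp (k1*t) / k1" using assms(1) by (simp add: field_simps)
  then have "t * exp (-k1*t) \<le> exp (k1*t) / k1 * exp (-k1*t)" by (rule mult_right_mono) simp
  also have "\<dots> = 1/k1" by (simp add: exp_minus field_simps)
  finally have a1: "t * exp (-k1*t) \<le> 1/k1" .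
  have "exp (-z*t) \<le> exp (-k1*t)" using assms(2) True by (simp add: mult_right_mono)
  then have "t * exp (-z*t) \<le> t * exp (-k1*t)" using True by (simp add: mult_left_mono)
  then have "\<bar>t * exp (-z*t)\<bar> \<le> 1/k1" using a1 True by simp
  moreover have "\<bar>a\<bar> * exp (k2 * \<bar>a\<bar>) \<ge> 0" by simp
  ultimately show ?thesis by linarith
next
  case False
  then have ta: "\<bar>t\<bar> \<le> \<bar>a\<bar>" using assms(4) by simp
  have "-z*t \<le> k2 * \<bar>a\<bar>"
  proof -
    have "-z*t = z * \<bar>t\<bar>" using False by simp
    also have "\<dots> \<le> k2 * \<bar>a\<bar>" using ta assms by (intro mult_mono) auto
    finally show ?thesis .
  qed
  then have "exp (-z*t) \<le> exp (k2 * \<bar>a\<bar>)" by simp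
  then have "\<bar>t\<bar> * exp (-z*t) \<le> \<bar>a\<bar> * exp (k2 * \<bar>a\<bar>)" using ta by (intro mult_mono) auto
  moreover have "1/k1 \<ge> 0" using assms by simp
  moreover have "\<bar>t * exp (-z*t)\<bar> = \<bar>t\<bar> * exp (-z*t)" by (simp add: abs_mult)
  ultimately show ?thesis by linarith
qed

lemma exp_lip:
  fixes m k t a k1 k2 :: real
  assumes "0 < k1" "k1 \<le> m" "m \<le> k2" "k1 \<le> k" "k \<le> k2" "a \<le> t"
  shows "\<bar>exp (-m*t) - exp (-k*t)\<bar> \<le> \<bar>m - k\<bar> * (1/k1 + \<bar>a\<bar> * exp (k2 * \<bar>a\<bar>))"
proof -
  define L where "L = 1/k1 + \<bar>a\<bar> * exp (k2 * \<bar>a\<bar>)"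
  have gen: "\<bar>exp (-hi*t) - exp (-lo*t)\<bar> \<le> (hi - lo) * L" if "k1 \<le> lo" "lo \<le> hi" "hi \<le> k2" for lo hi
  proof (cases "lo = hi")
    case True then show ?thesis by simp
  next
    case False
    then have lh: "lo < hi" using that by simp
    have d: "((\<lambda>s. exp (-s*t)) has_real_derivative - t * exp (-x*t)) (at x)" for x
      by (auto intro!: derivative_eq_intros)
    obtain z where z: "lo < z" "z < hi" "exp (-hi*t) - exp (-lo*t) = (hi - lo) * (- t * exp (-z*t))"
      using MVT2[OF lh, of "\<lambda>s. exp (-s*t)" "\<lambda>s. - t * exp (-s*t)"] d by blast
    have "\<bar>- t * exp (-z*t)\<bar> \<le> L" unfolding L_def
      using t_exp_bound[OF assms(1) _ _ assms(6), of z k2] z that by simp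
    then show ?thesis using z lh by (simp add: abs_mult mult_left_mono)
  qed
  show ?thesis
  proof (cases "k \<le> m")
    case True
    then show ?thesis using gen[of k m] assms unfolding L_def by simp
  next
    case False
    then show ?thesis using gen[of m k] assms unfolding L_def by (simp add: abs_minus_commute)
  qed
qed

locale fam =
  fixes p :: real and V :: "real \<Rightarrow> real \<Rightarrow> real"
  assumes p: "p > 0" and sols: "\<And>lam. lam < 1 \<Longrightarrow> is_sol p lam (V lam)"
begin

lemma J: "lam < 1 \<Longrightarrow> jost p lam (V lam)"
  by unfold_locales (use p sols in auto)

abbreviation DV :: "real \<Rightarrow> real \<Rightarrow> real" where "DV lam \<equiv> deriv (V lam)"

lemma kk_cont: "lam < 1 \<Longrightarrow> isCont kk lam"
  unfolding kk_def by (intro continuous_intros)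

lemma ev_good:
  assumes "lam0 < 1"
  shows "\<forall>\<^sub>F mu in nhds lam0. mu < 1 \<and> kk lam0 / 2 \<le> kk mu \<and> kk mu \<le> 2 * kk lam0"
proof -
  have k0: "kk lam0 > 0" using jost.kpos[OF J[OF assms]] .
  have "\<forall>\<^sub>F mu in nhds lam0. mu \<in> {..<1}" by (rule eventually_nhds_in_open) (use assms in auto)
  then have "\<forall>\<^sub>F mu in nhds lam0. mu < 1" by simp
  moreover have "\<forall>\<^sub>F mu in nhds lam0. dist (kk mu) (kk lam0) < kk lam0 / 2"
    using kk_cont[OF assms] k0 unfolding isCont_def by (intro tendstoD) (auto simp: tendsto_at_iff_tendsto_nhds)
  ultimately show ?thesis
  proof eventually_elim
    case (elim mu)
    then have a: "mu < 1" and d: "dist (kk mu) (kk lam0) < kk lam0/2" by auto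
    from d have b: "kk mu - kk lam0 < kk lam0/2 \<and> -(kk mu - kk lam0) < kk lam0/2"
      unfolding dist_real_def abs_less_iff .
    show ?case using a b by auto
  qed
qed

definition "MB lam0 = exp (2 * ((2*p+1)*(p+1)) / (p * kk lam0))"

lemma Mb_le:
  assumes "lam0 < 1" "mu < 1" "kk lam0 / 2 \<le> kk mu"
  shows "jost.Mb p mu \<le> MB lam0"
proof -
  have k0: "kk lam0 > 0" using jost.kpos[OF J[OF assms(1)]] .
  have "(2*p+1)*(p+1) / (p * kk mu) \<le> (2*p+1)*(p+1) / (p * (kk lam0 / 2))"
    using assms k0 p by (intro divide_left_mono mult_left_mono mult_pos_pos) auto
  then show ?thesis unfolding jost.Mb_def[OF J[OF assms(2)]] MB_def by (simp add: field_simps)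
qed

lemma DV_eq: "mu < 1 \<Longrightarrow> DV mu t = exp (-kk mu*t) * (kk mu * UU (V mu) mu t - 2 * kk mu + PHI p (V mu) mu t)"
  using jost.D_eq[OF J] by (simp add: algebra_simps)

lemma V_eq: "mu < 1 \<Longrightarrow> V mu t = exp (-kk mu*t) * UU (V mu) mu t"
  using jost.V_eq[OF J] by simp

lemma fam_bounds:
  assumes "lam0 < 1"
  shows "\<exists>C \<kappa>. \<kappa> > 0 \<and> (\<forall>\<^sub>F mu in nhds lam0. mu < 1 \<and>
           (\<forall>t\<ge>a. \<bar>V mu t\<bar> \<le> C * exp (-\<kappa>*t) \<and> \<bar>DV mu t\<bar> \<le> C * exp (-\<kappa>*t)))"
proof -
  define k0 where "k0 = kk lam0"
  have k0: "k0 > 0" unfolding k0_def using jost.kpos[OF J[OF assms]] .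
  define E where "E = exp (2 * k0 * \<bar>a\<bar>)"
  define R where "R = 2 * k0 * MB lam0 + 4 * k0 + MB lam0 * cc p"
  define C where "C = E * (MB lam0 + R)"
  have MB0: "MB lam0 \<ge> 0" unfolding MB_def by simp
  have cc0: "cc p \<ge> 0" unfolding cc_def using p by simp
  have E0: "E \<ge> 0" unfolding E_def by simp
  show ?thesis
  proof (intro exI conjI)
    show "k0/2 > 0" using k0 by simp
    show "\<forall>\<^sub>F mu in nhds lam0. mu < 1 \<and> (\<forall>t\<ge>a. \<bar>V mu t\<bar> \<le> C * exp (-(k0/2)*t) \<and> \<bar>DV mu t\<bar> \<le> C * exp (-(k0/2)*t))"
      using ev_good[OF assms]
    proof eventually_elim
      case (elim mu)
      then have mu: "mu < 1" and m1: "k0/2 \<le> kk mu" and m2: "kk mu \<le> 2*k0" unfolding k0_def by auto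
      have Mb: "jost.Mb p mu \<le> MB lam0" using Mb_le[OF assms mu] m1 unfolding k0_def by simp
      have ex: "exp (-kk mu * t) \<le> E * exp (-(k0/2)*t)" if "t \<ge> a" for t
      proof -
        have "exp (-kk mu * t) \<le> exp (-(kk mu - k0/2)*a) * exp (-(k0/2)*t)"
          by (rule exp_shift) (use m1 that in auto)
        moreover have "exp (-(kk mu - k0/2)*a) \<le> E"
        proof -
          have "(kk mu - k0/2) * (-a) \<le> (kk mu - k0/2) * \<bar>a\<bar>" by (rule mult_left_mono) (use m1 in auto)
          then have "-(kk mu - k0/2)*a \<le> (kk mu - k0/2) * \<bar>a\<bar>" by (simp add: algebra_simps)
          also have "\<dots> \<le> 2 * k0 * \<bar>a\<bar>" using m1 m2 k0 by (intro mult_right_mono) auto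
          finally show ?thesis unfolding E_def by simp
        qed
        ultimately show ?thesis by (meson exp_gt_zero less_imp_le mult_right_mono order_trans)
      qed
      have Ub: "\<bar>UU (V mu) mu t\<bar> \<le> MB lam0" for t using jost.U_bound[OF J[OF mu], of t] Mb by simp
      have Pb: "\<bar>PHI p (V mu) mu t\<bar> \<le> MB lam0 * cc p" for t
      proof -
        have "\<bar>PHI p (V mu) mu t\<bar> \<le> jost.Mb p mu * cc p"
          using jost.Phi_bound[OF J[OF mu], of t] unfolding cc_def by simp
        also have "\<dots> \<le> MB lam0 * cc p" using Mb cc0 by (rule mult_right_mono)
        finally show ?thesis .
      qed
      have kpos: "kk mu > 0" using jost.kpos[OF J[OF mu]] .
      show ?case
      proof (intro conjI mu allI impI)
        fix t assume t: "t \<ge> a"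
        have "\<bar>V mu t\<bar> = exp (-kk mu*t) * \<bar>UU (V mu) mu t\<bar>" using V_eq[OF mu] by (simp add: abs_mult)
        also have "\<dots> \<le> (E * exp (-(k0/2)*t)) * MB lam0" using ex[OF t] Ub E0 by (intro mult_mono) auto
        also have "\<dots> \<le> (E * exp (-(k0/2)*t)) * (MB lam0 + R)"
          using E0 k0 MB0 cc0 unfolding R_def by (intro mult_left_mono) auto
        also have "\<dots> = C * exp (-(k0/2)*t)" unfolding C_def by simp
        finally show "\<bar>V mu t\<bar> \<le> C * exp (-(k0/2)*t)" .
        have "\<bar>kk mu * UU (V mu) mu t - 2 * kk mu + PHI p (V mu) mu t\<bar> \<le> kk mu * MB lam0 + 2 * kk mu + MB lam0 * cc p"
          using Ub[of t] Pb[of t] kpos by (auto simp: abs_mult intro!: order_trans[OF abs_triangle_ineq] add_mono abs_triangle_ineq4[THEN order_trans] mult_left_mono)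
        also have "\<dots> \<le> 2 * k0 * MB lam0 + 4 * k0 + MB lam0 * cc p"
          using m2 MB0 by (auto intro!: add_mono mult_right_mono)
        finally have b: "\<bar>kk mu * UU (V mu) mu t - 2 * kk mu + PHI p (V mu) mu t\<bar> \<le> 2 * k0 * MB lam0 + 4 * k0 + MB lam0 * cc p" .
        have "\<bar>DV mu t\<bar> = exp (-kk mu*t) * \<bar>kk mu * UU (V mu) mu t - 2 * kk mu + PHI p (V mu) mu t\<bar>"
          using DV_eq[OF mu, of t] by (simp add: abs_mult)
        also have "\<dots> \<le> (E * exp (-(k0/2)*t)) * (2 * k0 * MB lam0 + 4 * k0 + MB lam0 * cc p)"
          using ex[OF t] b E0 by (intro mult_mono) auto
        also have "\<dots> \<le> (E * exp (-(k0/2)*t)) * (MB lam0 + R)"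
          using E0 k0 MB0 cc0 unfolding R_def by (intro mult_left_mono) auto
        also have "\<dots> = C * exp (-(k0/2)*t)" unfolding C_def by simp
        finally show "\<bar>DV mu t\<bar> \<le> C * exp (-(k0/2)*t)" .
      qed
    qed
  qed
qed

end



context fam begin

lemma kk_nhds: "lam0 < 1 \<Longrightarrow> (kk \<longlongrightarrow> kk lam0) (nhds lam0)"
  using kk_cont unfolding isCont_def by (simp add: tendsto_at_iff_tendsto_nhds)

lemma Phi_diff:
  assumes "mu < 1" "lam0 < 1" "\<And>t. \<bar>UU (V mu) mu t - UU (V lam0) lam0 t\<bar> \<le> B"
  shows "\<bar>PHI p (V mu) mu x - PHI p (V lam0) lam0 x\<bar> \<le> B * cc p"
proof -
  have "PHI p (V mu) mu x - PHI p (V lam0) lam0 x = tail (\<lambda>t. hh p t * UU (V mu) mu t - hh p t * UU (V lam0) lam0 t) x"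
    unfolding PHI_def by (rule tail_diff[OF jost.eU[OF J[OF assms(1)]] jost.eU[OF J[OF assms(2)]] order_refl, symmetric])
  also have "\<dots> = tail (\<lambda>t. hh p t * (UU (V mu) mu t - UU (V lam0) lam0 t)) x" by (simp add: algebra_simps)
  also have "\<bar>\<dots>\<bar> \<le> B * HH p x"
    by (rule tail_hh_mult_bound[OF p]) (use assms jost.contU[OF J[OF assms(1)]] jost.contU[OF J[OF assms(2)]] in \<open>auto intro: continuous_intros\<close>)
  also have "\<dots> \<le> B * cc p"
  proof -
    have "B \<ge> 0" using assms(3)[of 0] by linarith
    then show ?thesis using HH_le[OF p, of x] unfolding cc_def by (intro mult_left_mono) auto
  qed
  finally show ?thesis .
qed

lemma fam_ucont:
  assumes "lam0 < 1" "\<epsilon> > 0"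
  shows "\<forall>\<^sub>F mu in nhds lam0. \<forall>t\<ge>a. \<bar>V mu t - V lam0 t\<bar> \<le> \<epsilon> \<and> \<bar>DV mu t - DV lam0 t\<bar> \<le> \<epsilon>"
proof -
  define k0 where "k0 = kk lam0"
  have k0: "k0 > 0" unfolding k0_def using jost.kpos[OF J[OF assms(1)]] .
  define MM where "MM = MB lam0"
  have MM0: "MM \<ge> 0" unfolding MM_def MB_def by simp
  have cc0: "cc p \<ge> 0" unfolding cc_def using p by simp
  define A1 where "A1 = MM * cc p * exp (cc p / k0)"
  have A10: "A1 \<ge> 0" unfolding A1_def using MM0 cc0 by simp
  define E where "E = exp (2 * k0 * \<bar>a\<bar>)"
  have E0: "E \<ge> 0" unfolding E_def by simp
  define L where "L = 1/(k0/2) + \<bar>a\<bar> * exp ((2*k0) * \<bar>a\<bar>)"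
  have L0: "L \<ge> 0" unfolding L_def using k0 by simp
  define Zb where "Zb = k0 * MM + 2 * k0 + MM * cc p"
  have Zb0: "Zb \<ge> 0" unfolding Zb_def using k0 MM0 cc0 by simp
  define K where "K = E * A1 + MM * L + E * (2 * k0 * A1 + (MM + 2) + A1 * cc p) + L * Zb + 1"
  have nn: "E * A1 \<ge> 0" "MM * L \<ge> 0" "L * Zb \<ge> 0" using E0 A10 MM0 L0 Zb0 by auto
  have nn2: "E * (2 * k0 * A1 + (MM + 2) + A1 * cc p) \<ge> 0" using E0 A10 MM0 k0 cc0 by auto
  have K0: "K > 0" unfolding K_def using nn nn2 by linarith
  have K1: "E * A1 + MM * L \<le> K" unfolding K_def using nn nn2 by linarith
  have K2: "E * (2 * k0 * A1 + (MM + 2) + A1 * cc p) + L * Zb \<le> K" unfolding K_def using nn nn2 by linarith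
  define \<omega> where "\<omega> = (\<lambda>mu. \<bar>1/(2 * kk mu) - 1/(2 * k0)\<bar> + \<bar>kk mu - k0\<bar>)"
  have "((\<lambda>mu. K * \<omega> mu) \<longlongrightarrow> K * (\<bar>1/(2 * k0) - 1/(2 * k0)\<bar> + \<bar>k0 - k0\<bar>)) (nhds lam0)"
    unfolding \<omega>_def using k0 by (intro tendsto_intros kk_nhds[OF assms(1), unfolded k0_def[symmetric]]) auto
  then have "((\<lambda>mu. K * \<omega> mu) \<longlongrightarrow> 0) (nhds lam0)" by simp
  then have ev\<omega>: "\<forall>\<^sub>F mu in nhds lam0. K * \<omega> mu < \<epsilon>" using assms(2) by (rule order_tendstoD)
  show ?thesis using ev\<omega> ev_good[OF assms(1)]
  proof eventually_elim
    case (elim mu)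
    then have mu: "mu < 1" and m1: "k0/2 \<le> kk mu" and m2: "kk mu \<le> 2*k0" and Kw: "K * \<omega> mu < \<epsilon>"
      unfolding k0_def by auto
    define m where "m = kk mu"
    define w where "w = \<bar>1/(2 * m) - 1/(2 * k0)\<bar>"
    define q where "q = \<bar>m - k0\<bar>"
    have w0: "w \<ge> 0" and q0: "q \<ge> 0" unfolding w_def q_def by auto
    have \<omega>wq: "\<omega> mu = w + q" unfolding \<omega>_def w_def q_def m_def ..
    have mpos: "m > 0" using m1 k0 unfolding m_def by simp
    have Mb0: "jost.Mb p lam0 \<le> MM" unfolding MM_def using Mb_le[OF assms(1) assms(1)] k0 unfolding k0_def by simp
    have Mbm: "jost.Mb p mu \<le> MM" unfolding MM_def using Mb_le[OF assms(1) mu] m1 unfolding k0_def by simp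
    have U0b: "\<bar>UU (V lam0) lam0 t\<bar> \<le> MM" for t using jost.U_bound[OF J[OF assms(1)], of t] Mb0 by simp
    have dU: "\<bar>UU (V mu) mu t - UU (V lam0) lam0 t\<bar> \<le> A1 * w" for t
    proof -
      have "\<bar>UU (V mu) mu t - UU (V lam0) lam0 t\<bar> \<le> jost.Mb p lam0 * cc p * w * exp (1/(2*m) * HH p t)"
        using U_diff[OF J[OF mu] J[OF assms(1)], of t] unfolding w_def m_def k0_def .
      also have "\<dots> \<le> MM * cc p * w * exp (cc p / k0)"
      proof (rule mult_mono)
        have "1/(2*m) * HH p t \<le> 1/k0 * cc p"
          using HH_le[OF p, of t] HH_nonneg[OF p, of t] m1 k0 mpos unfolding cc_def m_def
          by (intro mult_mono) (auto simp: field_simps)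
        then show "exp (1/(2*m) * HH p t) \<le> exp (cc p / k0)" by simp
        show "jost.Mb p lam0 * cc p * w \<le> MM * cc p * w" using Mb0 cc0 w0 by (intro mult_right_mono) auto
      qed (use MM0 cc0 w0 in auto)
      finally show ?thesis unfolding A1_def by (simp add: algebra_simps)
    qed
    have dP: "\<bar>PHI p (V mu) mu t - PHI p (V lam0) lam0 t\<bar> \<le> A1 * w * cc p" for t
      by (rule Phi_diff[OF mu assms(1) dU])
    have P0b: "\<bar>PHI p (V lam0) lam0 t\<bar> \<le> MM * cc p" for t
    proof -
      have "\<bar>PHI p (V lam0) lam0 t\<bar> \<le> jost.Mb p lam0 * cc p"
        using jost.Phi_bound[OF J[OF assms(1)], of t] unfolding cc_def by simp
      also have "\<dots> \<le> MM * cc p" using Mb0 cc0 by (rule mult_right_mono)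
      finally show ?thesis .
    qed
    show ?case
    proof (intro allI impI conjI)
      fix t assume t: "t \<ge> a"
      have em: "exp (-m*t) \<le> E"
      proof -
        have "-t \<le> \<bar>a\<bar>" using t abs_ge_minus_self[of a] by linarith
        then have "m * (-t) \<le> m * \<bar>a\<bar>" by (rule mult_left_mono) (use mpos in auto)
        then have "-m*t \<le> m * \<bar>a\<bar>" by simp
        also have "\<dots> \<le> 2*k0*\<bar>a\<bar>" using m2 unfolding m_def by (intro mult_right_mono) auto
        finally show ?thesis unfolding E_def by simp
      qed
      have ek: "exp (-k0*t) \<le> E"
      proof -
        have "-t \<le> \<bar>a\<bar>" using t abs_ge_minus_self[of a] by linarith
        then have "k0 * (-t) \<le> k0 * \<bar>a\<bar>" by (rule mult_left_mono) (use k0 in auto)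
        then have "-k0*t \<le> k0 * \<bar>a\<bar>" by simp
        also have "\<dots> \<le> 2*k0*\<bar>a\<bar>" using k0 by (intro mult_right_mono) auto
        finally show ?thesis unfolding E_def by simp
      qed
      have lip: "\<bar>exp (-m*t) - exp (-k0*t)\<bar> \<le> q * L"
        unfolding q_def L_def by (rule exp_lip) (use m1 m2 k0 t in \<open>auto simp: m_def\<close>)
      have Veq: "V mu t - V lam0 t = exp (-m*t) * (UU (V mu) mu t - UU (V lam0) lam0 t)
           + (exp (-m*t) - exp (-k0*t)) * UU (V lam0) lam0 t"
        using V_eq[OF mu, of t] V_eq[OF assms(1), of t] unfolding m_def k0_def by (simp add: algebra_simps)
      have "\<bar>V mu t - V lam0 t\<bar> \<le> E * (A1 * w) + (q * L) * MM"
        unfolding Veq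
        by (rule order_trans[OF abs_triangle_ineq add_mono]; unfold abs_mult; rule mult_mono)
           (use em dU lip U0b A10 w0 L0 q0 MM0 E0 in auto)
      also have "\<dots> \<le> K * \<omega> mu"
      proof -
        have "E * (A1 * w) + (q * L) * MM \<le> (E * A1 + MM * L) * (w + q)"
          using E0 A10 w0 q0 MM0 L0 by (simp add: algebra_simps add_mono mult_nonneg_nonneg)
        also have "\<dots> \<le> K * (w + q)" using K1 w0 q0 by (intro mult_right_mono) auto
        finally show ?thesis unfolding \<omega>wq by (simp add: distrib_left)
      qed
      finally show "\<bar>V mu t - V lam0 t\<bar> \<le> \<epsilon>" using Kw by simp
      define Zm where "Zm = m * UU (V mu) mu t - 2 * m + PHI p (V mu) mu t"
      define Z0 where "Z0 = k0 * UU (V lam0) lam0 t - 2 * k0 + PHI p (V lam0) lam0 t"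
      have Z0b: "\<bar>Z0\<bar> \<le> Zb" unfolding Z0_def Zb_def
        using U0b[of t] P0b[of t] k0
        by (auto simp: abs_mult intro!: order_trans[OF abs_triangle_ineq] add_mono abs_triangle_ineq4[THEN order_trans] mult_left_mono)
      have "Zm - Z0 = m * (UU (V mu) mu t - UU (V lam0) lam0 t) + (m - k0) * UU (V lam0) lam0 t - 2 * (m - k0)
          + (PHI p (V mu) mu t - PHI p (V lam0) lam0 t)" unfolding Zm_def Z0_def by (simp add: algebra_simps)
      note eq = this
      have e1: "\<bar>m * (UU (V mu) mu t - UU (V lam0) lam0 t)\<bar> \<le> m * (A1 * w)"
        using dU[of t] mpos by (simp add: abs_mult mult_left_mono)
      have e2: "\<bar>(m - k0) * UU (V lam0) lam0 t\<bar> \<le> q * MM"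
        using U0b[of t] q0 unfolding q_def by (simp add: abs_mult mult_left_mono)
      have e3: "\<bar>2 * (m - k0)\<bar> = 2 * q" unfolding q_def by (simp only: abs_mult)
      have "\<bar>Zm - Z0\<bar> \<le> m * (A1 * w) + q * MM + 2 * q + A1 * w * cc p"
        using eq e1 e2 e3 dP[of t] by linarith
      also have "\<dots> \<le> 2 * k0 * A1 * w + q * (MM + 2) + A1 * cc p * w"
      proof -
        have "m * (A1 * w) \<le> (2 * k0) * (A1 * w)" by (rule mult_right_mono) (use m2 A10 w0 in \<open>auto simp: m_def\<close>)
        moreover have "(2 * k0) * (A1 * w) = 2 * k0 * A1 * w" "q * (MM + 2) = q * MM + 2 * q" "A1 * w * cc p = A1 * cc p * w"
          by (simp_all add: algebra_simps)
        ultimately show ?thesis by linarith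
      qed
      finally have dZ: "\<bar>Zm - Z0\<bar> \<le> 2 * k0 * A1 * w + q * (MM + 2) + A1 * cc p * w" .
      have Deq: "DV mu t - DV lam0 t = exp (-m*t) * (Zm - Z0) + (exp (-m*t) - exp (-k0*t)) * Z0"
        using DV_eq[OF mu, of t] DV_eq[OF assms(1), of t] unfolding m_def k0_def Zm_def Z0_def by (simp add: algebra_simps)
      have "\<bar>DV mu t - DV lam0 t\<bar> \<le> E * (2 * k0 * A1 * w + q * (MM + 2) + A1 * cc p * w) + (q * L) * Zb"
        unfolding Deq
        by (rule order_trans[OF abs_triangle_ineq add_mono]; unfold abs_mult; rule mult_mono)
           (use em dZ lip Z0b A10 w0 L0 q0 MM0 E0 in auto)
      also have "\<dots> \<le> K * \<omega> mu"
      proof -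
        have "E * (2 * k0 * A1 * w + q * (MM + 2) + A1 * cc p * w) + (q * L) * Zb
            \<le> (E * (2 * k0 * A1 + (MM + 2) + A1 * cc p) + L * Zb) * (w + q)"
          using E0 A10 w0 q0 MM0 L0 Zb0 k0 cc0 by (simp add: algebra_simps add_mono mult_nonneg_nonneg)
        also have "\<dots> \<le> K * (w + q)" using K2 w0 q0 by (intro mult_right_mono) auto
        finally show ?thesis unfolding \<omega>wq by (simp add: distrib_left)
      qed
      finally show "\<bar>DV mu t - DV lam0 t\<bar> \<le> \<epsilon>" using Kw by simp
    qed
  qed
qed

end



context fam begin

lemma ev_comp: "(f \<longlongrightarrow> l) F \<Longrightarrow> eventually P (nhds l) \<Longrightarrow> eventually (\<lambda>s. P (f s)) F"
  by (simp add: filterlim_iff)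

lemma contV: "lam < 1 \<Longrightarrow> continuous_on UNIV (V lam)"
  using jost.contV[OF J] .
lemma contDV: "lam < 1 \<Longrightarrow> continuous_on UNIV (DV lam)"
  using jost.contD[OF J] .
lemma dV: "lam < 1 \<Longrightarrow> (V lam has_real_derivative DV lam x) (at x)"
  using jost.dV[OF J] .
lemma dDV: "lam < 1 \<Longrightarrow> (DV lam has_real_derivative ((1 - lam) * V lam x - hh p x * V lam x)) (at x)"
  using jost.dD[OF J] .

lemma joint_cont:
  assumes lam: "lam < 1" and f: "(f \<longlongrightarrow> lam) F" and y: "(y \<longlongrightarrow> \<zeta>) F"
  shows "((\<lambda>s. V (f s) (y s)) \<longlongrightarrow> V lam \<zeta>) F" "((\<lambda>s. DV (f s) (y s)) \<longlongrightarrow> DV lam \<zeta>) F"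
proof -
  have yev: "\<forall>\<^sub>F s in F. y s \<ge> \<zeta> - 1"
    using order_tendstoD(1)[OF y, of "\<zeta> - 1"] by (auto elim: eventually_mono)
  have "isCont (V lam) \<zeta>" using contV[OF lam] by (simp add: continuous_on_eq_continuous_at)
  then have cV: "((\<lambda>s. V lam (y s)) \<longlongrightarrow> V lam \<zeta>) F" by (rule isCont_tendsto_compose[OF _ y])
  have "isCont (DV lam) \<zeta>" using contDV[OF lam] by (simp add: continuous_on_eq_continuous_at)
  then have cD: "((\<lambda>s. DV lam (y s)) \<longlongrightarrow> DV lam \<zeta>) F" by (rule isCont_tendsto_compose[OF _ y])
  have u: "\<forall>\<^sub>F s in F. \<bar>V (f s) (y s) - V lam (y s)\<bar> \<le> e \<and> \<bar>DV (f s) (y s) - DV lam (y s)\<bar> \<le> e" if "e > 0" for e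
    using ev_comp[OF f fam_ucont[OF lam that, of "\<zeta> - 1"]] yev by eventually_elim auto
  show "((\<lambda>s. V (f s) (y s)) \<longlongrightarrow> V lam \<zeta>) F"
  proof (rule tendstoI)
    fix e :: real assume e: "e > 0"
    have "e/3 > 0" using e by simp
    note u3 = u[OF this]
    have "\<forall>\<^sub>F s in F. dist (V lam (y s)) (V lam \<zeta>) < e/2" using tendstoD[OF cV, of "e/2"] e by simp
    with u3 show "\<forall>\<^sub>F s in F. dist (V (f s) (y s)) (V lam \<zeta>) < e"
      by eventually_elim (use e in \<open>unfold dist_real_def, linarith\<close>)
  qed
  show "((\<lambda>s. DV (f s) (y s)) \<longlongrightarrow> DV lam \<zeta>) F"
  proof (rule tendstoI)
    fix e :: real assume e: "e > 0"
    have "e/3 > 0" using e by simp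
    note u3 = u[OF this]
    have "\<forall>\<^sub>F s in F. dist (DV lam (y s)) (DV lam \<zeta>) < e/2" using tendstoD[OF cD, of "e/2"] e by simp
    with u3 show "\<forall>\<^sub>F s in F. dist (DV (f s) (y s)) (DV lam \<zeta>) < e"
      by eventually_elim (use e in \<open>unfold dist_real_def, linarith\<close>)
  qed
qed

lemma edom_prod:
  assumes "mu < 1" "nu < 1"
  shows "edom (\<lambda>t. V mu t * V nu t) a"
proof (rule edomI[where \<kappa>="kk mu + kk nu" and B="jost.Mb p mu * jost.Mb p nu"])
  show "continuous_on UNIV (\<lambda>t. V mu t * V nu t)" using contV[OF assms(1)] contV[OF assms(2)] by (intro continuous_intros)
  show "kk mu + kk nu > 0" using jost.kpos[OF J[OF assms(1)]] jost.kpos[OF J[OF assms(2)]] by simp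
  fix t
  have b1: "\<bar>V mu t\<bar> \<le> jost.Mb p mu * exp (-kk mu * t)"
    using V_eq[OF assms(1), of t] jost.U_bound[OF J[OF assms(1)], of t] by (simp add: abs_mult mult.commute mult_left_mono)
  have b2: "\<bar>V nu t\<bar> \<le> jost.Mb p nu * exp (-kk nu * t)"
    using V_eq[OF assms(2), of t] jost.U_bound[OF J[OF assms(2)], of t] by (simp add: abs_mult mult.commute mult_left_mono)
  have "\<bar>V mu t * V nu t\<bar> \<le> (jost.Mb p mu * exp (-kk mu * t)) * (jost.Mb p nu * exp (-kk nu * t))"
    unfolding abs_mult by (rule mult_mono[OF b1 b2]) (auto simp: jost.Mb_def[OF J[OF assms(1)]])
  also have "\<dots> = jost.Mb p mu * jost.Mb p nu * exp (- (kk mu + kk nu) * t)"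
    by (simp add: algebra_simps exp_add[symmetric])
  finally show "\<bar>V mu t * V nu t\<bar> \<le> jost.Mb p mu * jost.Mb p nu * exp (- (kk mu + kk nu) * t)" .
qed

lemma tail_prod_cont:
  assumes lam: "lam < 1" and f: "(f \<longlongrightarrow> lam) F" and g: "(g \<longlongrightarrow> lam) F" and y: "(y \<longlongrightarrow> \<zeta>) F"
  shows "((\<lambda>s. tail (\<lambda>t. V (f s) t * V (g s) t) (y s)) \<longlongrightarrow> tail (\<lambda>t. V lam t * V lam t) \<zeta>) F"
proof (rule tendstoI)
  fix e :: real assume e: "e > 0"
  define a where "a = \<zeta> - 1"
  define T0 where "T0 = tail (\<lambda>t. V lam t * V lam t)"
  have e0: "edom (\<lambda>t. V lam t * V lam t) a" by (rule edom_prod[OF lam lam])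
  have cT: "((\<lambda>s. T0 (y s)) \<longlongrightarrow> T0 \<zeta>) F"
  proof -
    have "isCont T0 \<zeta>" unfolding T0_def using tail_deriv[OF e0, of \<zeta>] a_def
      by (auto intro: DERIV_isCont)
    then show ?thesis using isCont_tendsto_compose[OF _ y] by blast
  qed
  have yev: "\<forall>\<^sub>F s in F. y s \<ge> a"
    using order_tendstoD(1)[OF y, of "\<zeta> - 1"] unfolding a_def by (auto elim: eventually_mono)
  obtain C \<kappa> where k: "\<kappa> > 0" and evb: "\<forall>\<^sub>F mu in nhds lam. mu < 1 \<and>
           (\<forall>t\<ge>a. \<bar>V mu t\<bar> \<le> C * exp (-\<kappa>*t) \<and> \<bar>DV mu t\<bar> \<le> C * exp (-\<kappa>*t))"
    using fam_bounds[OF lam] by blast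
  have blam: "\<forall>t\<ge>a. \<bar>V lam t\<bar> \<le> C * exp (-\<kappa>*t)" using eventually_nhds_x_imp_x[OF evb] by blast
  have C0: "C \<ge> 0"
  proof -
    have "0 \<le> C * exp (-\<kappa>*a)" using blam[rule_format, of a] by linarith
    then show ?thesis by (simp add: zero_le_mult_iff)
  qed
  define C1 where "C1 = C + 1"
  have C1: "C1 > 0" unfolding C1_def using C0 by simp
  define \<epsilon> where "\<epsilon> = e * \<kappa> / (4 * C1 * exp (-\<kappa>*a))"
  have \<epsilon>0: "\<epsilon> > 0" unfolding \<epsilon>_def using e k C1 by simp
  have main: "\<forall>\<^sub>F s in F. \<bar>tail (\<lambda>t. V (f s) t * V (g s) t) (y s) - T0 (y s)\<bar> \<le> e/2"
    using ev_comp[OF f fam_ucont[OF lam \<epsilon>0, of a]] ev_comp[OF g fam_ucont[OF lam \<epsilon>0, of a]]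
      ev_comp[OF f evb] ev_comp[OF g evb] yev
  proof eventually_elim
    case (elim s)
    then have fs: "f s < 1" and gs: "g s < 1" and ys: "y s \<ge> a"
      and uf: "\<And>t. t \<ge> a \<Longrightarrow> \<bar>V (f s) t - V lam t\<bar> \<le> \<epsilon>"
      and ug: "\<And>t. t \<ge> a \<Longrightarrow> \<bar>V (g s) t - V lam t\<bar> \<le> \<epsilon>"
      and bg: "\<And>t. t \<ge> a \<Longrightarrow> \<bar>V (g s) t\<bar> \<le> C * exp (-\<kappa>*t)" by auto
    have ef: "edom (\<lambda>t. V (f s) t * V (g s) t) a" by (rule edom_prod[OF fs gs])
    have eB: "edom (\<lambda>t. (2 * \<epsilon> * C) * exp (-\<kappa>*t)) a" by (intro edom_cmult edom_exp k)
    have "tail (\<lambda>t. V (f s) t * V (g s) t) (y s) - T0 (y s) = tail (\<lambda>t. V (f s) t * V (g s) t - V lam t * V lam t) (y s)"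
      unfolding T0_def by (rule tail_diff[OF ef e0 ys, symmetric])
    also have "\<bar>\<dots>\<bar> \<le> tail (\<lambda>t. (2 * \<epsilon> * C) * exp (-\<kappa>*t)) (y s)"
    proof (rule tail_abs_le[OF edom_diff[OF ef e0] eB ys])
      fix t assume t: "t \<ge> y s"
      then have ta: "t \<ge> a" using ys by simp
      have "V (f s) t * V (g s) t - V lam t * V lam t = (V (f s) t - V lam t) * V (g s) t + V lam t * (V (g s) t - V lam t)"
        by (simp add: algebra_simps)
      also have "\<bar>\<dots>\<bar> \<le> \<epsilon> * (C * exp (-\<kappa>*t)) + (C * exp (-\<kappa>*t)) * \<epsilon>"
        by (rule order_trans[OF abs_triangle_ineq add_mono]; unfold abs_mult; rule mult_mono)
           (use uf[OF ta] ug[OF ta] bg[OF ta] blam ta \<epsilon>0 C0 in auto)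
      also have "\<dots> = (2 * \<epsilon> * C) * exp (-\<kappa>*t)" by simp
      finally show "\<bar>V (f s) t * V (g s) t - V lam t * V lam t\<bar> \<le> (2 * \<epsilon> * C) * exp (-\<kappa>*t)" .
    qed
    also have "\<dots> = (2 * \<epsilon> * C) * (exp (-\<kappa>*y s) / \<kappa>)"
      using tail_cmult[OF edom_exp[OF k, of "y s"] order_refl, where C="2 * \<epsilon> * C"] tail_exp[OF k, of "y s"] by simp
    also have "\<dots> \<le> (2 * \<epsilon> * C1) * (exp (-\<kappa>*a) / \<kappa>)"
      using \<epsilon>0 C0 k ys unfolding C1_def by (intro mult_mono divide_right_mono) (auto simp: mult_left_mono)
    also have "\<dots> = e/2" unfolding \<epsilon>_def using k C1 by (simp add: field_simps)
    finally show ?case .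
  qed
  have "\<forall>\<^sub>F s in F. dist (T0 (y s)) (T0 \<zeta>) < e/2" using tendstoD[OF cT, of "e/2"] e by simp
  with main show "\<forall>\<^sub>F s in F. dist (tail (\<lambda>t. V (f s) t * V (g s) t) (y s)) (tail (\<lambda>t. V lam t * V lam t) \<zeta>) < e"
    unfolding T0_def by eventually_elim (unfold dist_real_def, linarith)
qed

end



lemma sign_keep:
  fixes s0 A B m :: real
  assumes "s0 * A > 0" "\<bar>B - A\<bar> \<le> m/2" "m \<le> \<bar>A\<bar>"
  shows "s0 * B > 0"
proof (cases "A > 0")
  case True
  then have "s0 > 0" using assms(1) by (simp add: zero_less_mult_iff)
  moreover have "B > 0" using True assms(2,3) by linarith
  ultimately show ?thesis by simp
next
  case False
  then have A: "A < 0" using assms(1) by (cases "A = 0") auto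
  then have "s0 < 0" using assms(1) by (simp add: zero_less_mult_iff)
  moreover have "B < 0" using A assms(2,3) by linarith
  ultimately show ?thesis by (simp add: mult_neg_neg)
qed

lemma sign_near:
  fixes s0 d :: real
  assumes "s0 \<noteq> 0" "\<bar>d - s0\<bar> < \<bar>s0\<bar>/2"
  shows "s0 * d > 0"
proof (cases "s0 > 0")
  case True
  moreover have "d > 0" using assms(2) True by linarith
  ultimately show ?thesis by simp
next
  case False then have "s0 < 0" using assms(1) by simp
  moreover have "d < 0" using assms(2) \<open>s0 < 0\<close> by linarith
  ultimately show ?thesis by (simp add: mult_neg_neg)
qed

context fam begin

lemma zero_between:
  assumes mu: "mu < 1" and y: "y1 < y2" and s: "s0 * V mu y1 < 0" "s0 * V mu y2 > 0"
  shows "\<exists>z. y1 < z \<and> z < y2 \<and> V mu z = 0"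
proof -
  have c: "continuous_on {y1..y2} (V mu)" using contV[OF mu] by (rule continuous_on_subset) simp
  have s0: "s0 \<noteq> 0" using s by auto
  obtain z where z: "y1 \<le> z" "z \<le> y2" "V mu z = 0"
  proof (cases "s0 > 0")
    case True
    then have "V mu y1 < 0" "V mu y2 > 0" using s by (auto simp: zero_less_mult_iff mult_less_0_iff)
    then show ?thesis using IVT'[of "V mu" y1 0 y2] c y that by auto
  next
    case False
    then have "V mu y1 > 0" "V mu y2 < 0" using s s0 by (auto simp: zero_less_mult_iff mult_less_0_iff)
    then show ?thesis using IVT2'[of "V mu" y2 0 y1] c y that by auto
  qed
  moreover have "z \<noteq> y1" "z \<noteq> y2" using z s by auto
  ultimately show ?thesis by force
qed

lemma sign_mvt:
  assumes mu: "mu < 1" and y: "y1 < y2" and d: "\<And>x. y1 \<le> x \<Longrightarrow> x \<le> y2 \<Longrightarrow> s0 * DV mu x > 0"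
  shows "s0 * (V mu y2 - V mu y1) > 0"
proof -
  obtain z where z: "y1 < z" "z < y2" "V mu y2 - V mu y1 = (y2 - y1) * DV mu z"
    using MVT2[OF y, of "V mu" "DV mu"] dV[OF mu] by blast
  have "s0 * (V mu y2 - V mu y1) = (y2 - y1) * (s0 * DV mu z)" using z(3) by simp
  also have "\<dots> > 0" using y d[of z] z by simp
  finally show ?thesis .
qed

lemma wronsk_lim:
  assumes mu: "mu < 1" and lam: "lam < 1"
  shows "((\<lambda>x. V mu x * DV lam x - DV mu x * V lam x) \<longlongrightarrow> 0) at_top"
proof -
  obtain C1 k1 where k1: "k1 > 0" and e1: "\<forall>\<^sub>F nu in nhds mu. nu < 1 \<and>
           (\<forall>t\<ge>0. \<bar>V nu t\<bar> \<le> C1 * exp (-k1*t) \<and> \<bar>DV nu t\<bar> \<le> C1 * exp (-k1*t))"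
    using fam_bounds[OF mu] by blast
  obtain C2 k2 where k2: "k2 > 0" and e2: "\<forall>\<^sub>F nu in nhds lam. nu < 1 \<and>
           (\<forall>t\<ge>0. \<bar>V nu t\<bar> \<le> C2 * exp (-k2*t) \<and> \<bar>DV nu t\<bar> \<le> C2 * exp (-k2*t))"
    using fam_bounds[OF lam] by blast
  have b1: "\<And>t. t \<ge> 0 \<Longrightarrow> \<bar>V mu t\<bar> \<le> C1 * exp (-k1*t) \<and> \<bar>DV mu t\<bar> \<le> C1 * exp (-k1*t)"
    using eventually_nhds_x_imp_x[OF e1] by blast
  have b2: "\<And>t. t \<ge> 0 \<Longrightarrow> \<bar>V lam t\<bar> \<le> C2 * exp (-k2*t) \<and> \<bar>DV lam t\<bar> \<le> C2 * exp (-k2*t)"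
    using eventually_nhds_x_imp_x[OF e2] by blast
  have C1: "C1 \<ge> 0" using b1[of 0] by (simp, linarith)
  have C2: "C2 \<ge> 0" using b2[of 0] by (simp, linarith)
  have ev: "\<forall>\<^sub>F x in at_top. norm (V mu x * DV lam x - DV mu x * V lam x) \<le> 2 * C1 * C2 * exp (-(k1+k2)*x)"
    unfolding eventually_at_top_linorder
  proof (rule exI[of _ 0], intro allI impI)
    fix x :: real assume x: "x \<ge> 0"
    have "\<bar>V mu x * DV lam x - DV mu x * V lam x\<bar> \<le> (C1 * exp (-k1*x)) * (C2 * exp (-k2*x)) + (C1 * exp (-k1*x)) * (C2 * exp (-k2*x))"
      by (rule order_trans[OF abs_triangle_ineq4 add_mono]; unfold abs_mult; rule mult_mono)
         (use b1[OF x] b2[OF x] C1 C2 in auto)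
    also have "\<dots> = 2 * C1 * C2 * exp (-(k1+k2)*x)" by (simp add: algebra_simps exp_add[symmetric])
    finally show "norm (V mu x * DV lam x - DV mu x * V lam x) \<le> 2 * C1 * C2 * exp (-(k1+k2)*x)" by simp
  qed
  have "((\<lambda>x. 2 * C1 * C2 * exp (-(k1+k2)*x)) \<longlongrightarrow> 2 * C1 * C2 * 0) at_top"
    using k1 k2 by (intro tendsto_intros exp_neg_lim0) auto
  then show ?thesis using Lim_null_comparison[OF ev] by simp
qed

lemma wronsk:
  assumes mu: "mu < 1" and lam: "lam < 1"
  shows "V mu x * DV lam x - DV mu x * V lam x = -(mu - lam) * tail (\<lambda>t. V mu t * V lam t) x"
proof -
  have e: "edom (\<lambda>t. -(mu - lam) * (V mu t * V lam t)) (x - 1)" by (intro edom_cmult edom_prod mu lam)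
  have "V mu x * DV lam x - DV mu x * V lam x = tail (\<lambda>t. -(mu - lam) * (V mu t * V lam t)) x"
  proof (rule tail_unique[OF e _ wronsk_lim[OF mu lam]])
    fix y
    show "((\<lambda>x. V mu x * DV lam x - DV mu x * V lam x) has_real_derivative - (-(mu - lam) * (V mu y * V lam y))) (at y)"
      by (rule derivative_eq_intros dV[OF mu] dV[OF lam] dDV[OF mu] dDV[OF lam] refl)+ (simp add: algebra_simps)
  qed simp
  also have "\<dots> = -(mu - lam) * tail (\<lambda>t. V mu t * V lam t) x"
    by (rule tail_cmult[OF edom_prod[OF mu lam] order_refl])
  finally show ?thesis .
qed

lemma tail_sq_pos:
  assumes lam: "lam < 1" and y0: "y0 > \<zeta>" and nz: "V lam y0 \<noteq> 0"
  shows "tail (\<lambda>t. V lam t * V lam t) \<zeta> > 0"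
proof -
  define T where "T = tail (\<lambda>t. V lam t * V lam t)"
  have e: "edom (\<lambda>t. V lam t * V lam t) (\<zeta> - 1)" by (rule edom_prod[OF lam lam])
  have nn: "T y \<ge> 0" if "y \<ge> \<zeta>" for y unfolding T_def
    by (rule tail_nonneg[OF e]) (use that in auto)
  have "T \<zeta> \<ge> 0" using nn by simp
  moreover have "T \<zeta> \<noteq> 0"
  proof
    assume T0: "T \<zeta> = 0"
    have z: "T y = 0" if "y \<in> {\<zeta><..}" for y
    proof -
      have "T y \<le> T \<zeta>" unfolding T_def by (rule tail_antimono[OF e]) (use that in auto)
      then show ?thesis using nn[of y] T0 that by simp
    qed
    have d1: "(T has_real_derivative - (V lam y0 * V lam y0)) (at y0)"
      unfolding T_def by (rule tail_deriv[OF e]) (use y0 in simp)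
    have d2: "(T has_real_derivative 0) (at y0)"
      by (rule has_field_derivative_transform_within_open[of "\<lambda>_. 0" 0 y0 "{\<zeta><..}"]) (use y0 z in auto)
    have "- (V lam y0 * V lam y0) = 0" using DERIV_unique[OF d1 d2] .
    then show False using nz by simp
  qed
  ultimately show ?thesis unfolding T_def by simp
qed

end



locale fam1 = fam +
  fixes lam1 x1 s0 \<rho> \<delta> :: real
  assumes lam1: "lam1 < 1" and s0: "s0 \<noteq> 0" and rho: "\<rho> > 0" "\<rho> \<le> 1"
    and del: "\<delta> > 0" "\<delta> \<le> 1 - lam1"
    and box: "\<And>mu x. \<bar>mu - lam1\<bar> < \<delta> \<Longrightarrow> \<bar>x - x1\<bar> < \<rho> \<Longrightarrow> s0 * DV mu x > 0"
    and ends: "\<And>mu. \<bar>mu - lam1\<bar> < \<delta> \<Longrightarrow> s0 * V mu (x1 + \<rho>/2) > 0 \<and> s0 * V mu (x1 - \<rho>/2) < 0"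
    and z1: "V lam1 x1 = 0"
begin

lemma mu_lt1: "\<bar>mu - lam1\<bar> < \<delta> \<Longrightarrow> mu < 1"
  using del by linarith

lemma zero_unique:
  assumes mu: "\<bar>mu - lam1\<bar> < \<delta>" and a: "\<bar>za - x1\<bar> < \<rho>" "\<bar>zb - x1\<bar> < \<rho>" and v: "V mu za = 0" "V mu zb = 0"
  shows "za = zb"
proof (rule ccontr)
  assume ne: "za \<noteq> zb"
  have *: "s0 * (V mu (max za zb) - V mu (min za zb)) > 0"
    by (rule sign_mvt[OF mu_lt1[OF mu]]) (use ne a in \<open>auto intro!: box[OF mu]\<close>)
  have "V mu (max za zb) = 0" "V mu (min za zb) = 0" using v by (auto simp: max_def min_def)
  then show False using * by simp
qed

definition x0 :: "real \<Rightarrow> real" where "x0 mu = (THE z. \<bar>z - x1\<bar> < \<rho> \<and> V mu z = 0)"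

lemma zero_ex:
  assumes mu: "\<bar>mu - lam1\<bar> < \<delta>"
  shows "\<exists>z. \<bar>z - x1\<bar> < \<rho>/2 \<and> V mu z = 0"
proof -
  obtain z where "x1 - \<rho>/2 < z" "z < x1 + \<rho>/2" "V mu z = 0"
    using zero_between[OF mu_lt1[OF mu], of "x1 - \<rho>/2" "x1 + \<rho>/2" s0] ends[OF mu] rho by auto
  moreover from this have "\<bar>z - x1\<bar> < \<rho>/2" by linarith
  ultimately show ?thesis by blast
qed

lemma x0_prop:
  assumes mu: "\<bar>mu - lam1\<bar> < \<delta>"
  shows "\<bar>x0 mu - x1\<bar> < \<rho>/2" "V mu (x0 mu) = 0"
proof -
  obtain z where z: "\<bar>z - x1\<bar> < \<rho>/2" "V mu z = 0" using zero_ex[OF mu] by blast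
  have "x0 mu = z" unfolding x0_def
  proof (rule the_equality)
    show "\<bar>z - x1\<bar> < \<rho> \<and> V mu z = 0" using z rho by auto
    fix z' assume "\<bar>z' - x1\<bar> < \<rho> \<and> V mu z' = 0"
    then show "z' = z" using zero_unique[OF mu, of z' z] z rho by auto
  qed
  then show "\<bar>x0 mu - x1\<bar> < \<rho>/2" "V mu (x0 mu) = 0" using z by auto
qed

lemma x0_uniq:
  assumes mu: "\<bar>mu - lam1\<bar> < \<delta>" and "\<bar>z - x1\<bar> < \<rho>" "V mu z = 0"
  shows "z = x0 mu"
  using zero_unique[OF mu assms(2) _ assms(3) x0_prop(2)[OF mu]] x0_prop(1)[OF mu] rho by auto

lemma x0_lam1: "x0 lam1 = x1"
  using x0_uniq[of lam1 x1] z1 rho del by simp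

lemma sign_r:
  assumes mu: "\<bar>lam - lam1\<bar> < \<delta>" and z: "\<bar>\<zeta> - x1\<bar> < \<rho>" "V lam \<zeta> = 0" and e: "e > 0" "\<bar>\<zeta> + e - x1\<bar> < \<rho>"
  shows "s0 * V lam (\<zeta> + e) > 0"
proof -
  have "s0 * (V lam (\<zeta> + e) - V lam \<zeta>) > 0"
    by (rule sign_mvt[OF mu_lt1[OF mu]]) (use z e in \<open>auto intro!: box[OF mu]\<close>)
  then show ?thesis using z by simp
qed

lemma sign_l:
  assumes mu: "\<bar>lam - lam1\<bar> < \<delta>" and z: "\<bar>\<zeta> - x1\<bar> < \<rho>" "V lam \<zeta> = 0" and e: "e > 0" "\<bar>\<zeta> - e - x1\<bar> < \<rho>"
  shows "s0 * V lam (\<zeta> - e) < 0"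
proof -
  have "s0 * (V lam \<zeta> - V lam (\<zeta> - e)) > 0"
    by (rule sign_mvt[OF mu_lt1[OF mu]]) (use z e in \<open>auto intro!: box[OF mu]\<close>)
  then show ?thesis using z by simp
qed

lemma ev_ball: "\<bar>lam - lam1\<bar> < \<delta> \<Longrightarrow> \<forall>\<^sub>F mu in nhds lam. \<bar>mu - lam1\<bar> < \<delta>"
proof -
  assume l: "\<bar>lam - lam1\<bar> < \<delta>"
  have "\<forall>\<^sub>F mu in nhds lam. mu \<in> {lam1 - \<delta><..<lam1 + \<delta>}" by (rule eventually_nhds_in_open) (use l in auto)
  then show ?thesis by eventually_elim auto
qed

lemma x0_cont:
  assumes lam: "\<bar>lam - lam1\<bar> < \<delta>"
  shows "(x0 \<longlongrightarrow> x0 lam) (nhds lam)"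
proof (rule tendstoI)
  fix e :: real assume e: "e > 0"
  define \<zeta> where "\<zeta> = x0 lam"
  have z: "\<bar>\<zeta> - x1\<bar> < \<rho>/2" "V lam \<zeta> = 0" unfolding \<zeta>_def using x0_prop[OF lam] by auto
  define e' where "e' = min (e/2) (\<rho>/4)"
  have e': "e' > 0" "e' \<le> e/2" "e' \<le> \<rho>/4" unfolding e'_def using e rho by auto
  have p1a: "\<bar>\<zeta> + e' - x1\<bar> < \<rho>" using z e' by linarith
  have p1b: "\<bar>\<zeta> - e' - x1\<bar> < \<rho>" using z e' by linarith
  note p1 = p1a p1b
  have A1: "s0 * V lam (\<zeta> + e') > 0" by (rule sign_r[OF lam _ z(2) e'(1) p1(1)]) (use z in linarith)
  have A2: "s0 * V lam (\<zeta> - e') < 0" by (rule sign_l[OF lam _ z(2) e'(1) p1(2)]) (use z in linarith)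
  define m where "m = min \<bar>V lam (\<zeta> + e')\<bar> \<bar>V lam (\<zeta> - e')\<bar>"
  have m: "m > 0" unfolding m_def using A1 A2 by auto
  have ev: "\<forall>\<^sub>F mu in nhds lam. \<forall>t\<ge>x1 - 1. \<bar>V mu t - V lam t\<bar> \<le> m/2 \<and> \<bar>DV mu t - DV lam t\<bar> \<le> m/2"
    by (rule fam_ucont[OF mu_lt1[OF lam]]) (use m in simp)
  show "\<forall>\<^sub>F mu in nhds lam. dist (x0 mu) (x0 lam) < e"
    using ev ev_ball[OF lam]
  proof eventually_elim
    case (elim mu)
    then have mu: "\<bar>mu - lam1\<bar> < \<delta>" and u: "\<And>t. t \<ge> x1 - 1 \<Longrightarrow> \<bar>V mu t - V lam t\<bar> \<le> m/2" by auto
    have ge: "\<zeta> + e' \<ge> x1 - 1" "\<zeta> - e' \<ge> x1 - 1" using p1 rho by auto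
    have B1: "s0 * V mu (\<zeta> + e') > 0"
      by (rule sign_keep[OF A1 u[OF ge(1)]]) (simp add: m_def)
    have "(-s0) * V mu (\<zeta> - e') > 0"
      by (rule sign_keep[where A="V lam (\<zeta> - e')" and m=m]) (use A2 u[OF ge(2)] in \<open>auto simp: m_def\<close>)
    then have B2: "s0 * V mu (\<zeta> - e') < 0" by simp
    obtain zz where zz: "\<zeta> - e' < zz" "zz < \<zeta> + e'" "V mu zz = 0"
      using zero_between[OF mu_lt1[OF mu] _ B2 B1] e' by auto
    have "zz = x0 mu" by (rule x0_uniq[OF mu _ zz(3)]) (use zz z e' in linarith)
    then show "dist (x0 mu) (x0 lam) < e" using zz e' unfolding \<zeta>_def dist_real_def by linarith
  qed
qed

end



context fam1 begin

definition Dval :: "real \<Rightarrow> real" where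
  "Dval lam = tail (\<lambda>t. V lam t * V lam t) (x0 lam) / (DV lam (x0 lam))\<^sup>2"

lemma DVne: "\<bar>lam - lam1\<bar> < \<delta> \<Longrightarrow> DV lam (x0 lam) \<noteq> 0"
  using box[of lam "x0 lam"] x0_prop(1)[of lam] rho by force

lemma Jpos:
  assumes lam: "\<bar>lam - lam1\<bar> < \<delta>"
  shows "tail (\<lambda>t. V lam t * V lam t) (x0 lam) > 0"
proof -
  define \<zeta> where "\<zeta> = x0 lam"
  have z: "\<bar>\<zeta> - x1\<bar> < \<rho>/2" "V lam \<zeta> = 0" unfolding \<zeta>_def using x0_prop[OF lam] by auto
  have a: "\<bar>\<zeta> + \<rho>/4 - x1\<bar> < \<rho>" using z rho by linarith
  have "s0 * V lam (\<zeta> + \<rho>/4) > 0" by (rule sign_r[OF lam _ z(2) _ a]) (use z rho in linarith)+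
  then have "V lam (\<zeta> + \<rho>/4) \<noteq> 0" by auto
  then show ?thesis unfolding \<zeta>_def[symmetric] by (rule tail_sq_pos[OF mu_lt1[OF lam], rotated]) (use rho in simp)
qed

lemma x0_at: "\<bar>lam - lam1\<bar> < \<delta> \<Longrightarrow> (x0 \<longlongrightarrow> x0 lam) (at lam)"
  using x0_cont tendsto_at_iff_tendsto_nhds by blast

lemma x0_deriv:
  assumes lam: "\<bar>lam - lam1\<bar> < \<delta>"
  shows "(x0 has_real_derivative Dval lam) (at lam)"
proof -
  have l1: "lam < 1" by (rule mu_lt1[OF lam])
  define \<zeta> where "\<zeta> = x0 lam"
  have z: "V lam \<zeta> = 0" unfolding \<zeta>_def using x0_prop[OF lam] by auto
  define Q where "Q = (\<lambda>y. if y = \<zeta> then DV lam \<zeta> else (V lam y - V lam \<zeta>) / (y - \<zeta>))"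
  have "((\<lambda>y. (V lam y - V lam \<zeta>) / (y - \<zeta>)) \<longlongrightarrow> DV lam \<zeta>) (at \<zeta>)"
    using dV[OF l1, of \<zeta>] unfolding has_field_derivative_iff by simp
  moreover have "\<forall>\<^sub>F y in at \<zeta>. (V lam y - V lam \<zeta>) / (y - \<zeta>) = Q y"
    unfolding Q_def eventually_at_filter by simp
  ultimately have "(Q \<longlongrightarrow> DV lam \<zeta>) (at \<zeta>)" by (rule Lim_transform_eventually)
  then have cQ: "isCont Q \<zeta>" unfolding isCont_def Q_def by simp
  have VQ: "V lam y = Q y * (y - \<zeta>)" for y unfolding Q_def using z by auto
  have x0l: "(x0 \<longlongrightarrow> \<zeta>) (at lam)" unfolding \<zeta>_def by (rule x0_at[OF lam])
  have QD: "((\<lambda>mu. Q (x0 mu) * DV mu (x0 mu)) \<longlongrightarrow> DV lam \<zeta> * DV lam \<zeta>) (at lam)"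
  proof (rule tendsto_mult)
    show "((\<lambda>mu. Q (x0 mu)) \<longlongrightarrow> DV lam \<zeta>) (at lam)"
      using isCont_tendsto_compose[OF cQ x0l] unfolding Q_def by simp
    show "((\<lambda>mu. DV mu (x0 mu)) \<longlongrightarrow> DV lam \<zeta>) (at lam)"
      by (rule joint_cont(2)[OF l1 tendsto_ident_at x0l])
  qed
  have Jl: "((\<lambda>mu. tail (\<lambda>t. V mu t * V lam t) (x0 mu)) \<longlongrightarrow> tail (\<lambda>t. V lam t * V lam t) \<zeta>) (at lam)"
    by (rule tail_prod_cont[OF l1 tendsto_ident_at tendsto_const x0l])
  have nz: "DV lam \<zeta> * DV lam \<zeta> \<noteq> 0" using DVne[OF lam] unfolding \<zeta>_def by simp
  have evne: "\<forall>\<^sub>F mu in at lam. Q (x0 mu) * DV mu (x0 mu) \<noteq> 0"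
    by (rule tendsto_imp_eventually_ne[OF QD nz])
  have evb: "\<forall>\<^sub>F mu in at lam. \<bar>mu - lam1\<bar> < \<delta>"
    unfolding eventually_at_filter using ev_ball[OF lam] by eventually_elim simp
  have evn: "\<forall>\<^sub>F mu in at lam. mu \<noteq> lam" by (simp add: eventually_at_filter)
  have ev: "\<forall>\<^sub>F mu in at lam. tail (\<lambda>t. V mu t * V lam t) (x0 mu) / (Q (x0 mu) * DV mu (x0 mu)) = (x0 mu - \<zeta>) / (mu - lam)"
    using evne evb evn
  proof eventually_elim
    case (elim mu)
    then have ne: "Q (x0 mu) * DV mu (x0 mu) \<noteq> 0" and mu: "\<bar>mu - lam1\<bar> < \<delta>" and ml: "mu \<noteq> lam" by auto
    have m1: "mu < 1" by (rule mu_lt1[OF mu])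
    define \<xi> where "\<xi> = x0 mu"
    have v\<xi>: "V mu \<xi> = 0" unfolding \<xi>_def using x0_prop[OF mu] by auto
    have w: "V mu \<xi> * DV lam \<xi> - DV mu \<xi> * V lam \<xi> = -(mu - lam) * tail (\<lambda>t. V mu t * V lam t) \<xi>"
      by (rule wronsk[OF m1 l1])
    then have "(\<xi> - \<zeta>) * (Q \<xi> * DV mu \<xi>) = (mu - lam) * tail (\<lambda>t. V mu t * V lam t) \<xi>"
      using v\<xi> VQ[of \<xi>] by (simp add: algebra_simps)
    then show ?case using ne ml unfolding \<xi>_def by (simp add: field_simps)
  qed
  have "((\<lambda>mu. tail (\<lambda>t. V mu t * V lam t) (x0 mu) / (Q (x0 mu) * DV mu (x0 mu)))
         \<longlongrightarrow> tail (\<lambda>t. V lam t * V lam t) \<zeta> / (DV lam \<zeta> * DV lam \<zeta>)) (at lam)"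
    by (rule tendsto_divide[OF Jl QD nz])
  then have "((\<lambda>mu. (x0 mu - x0 lam) / (mu - lam)) \<longlongrightarrow> Dval lam) (at lam)"
    unfolding Dval_def \<zeta>_def[symmetric] power2_eq_square using ev by (rule Lim_transform_eventually)
  then show ?thesis unfolding has_field_derivative_iff by simp
qed

lemma Dval_cont:
  assumes lam: "\<bar>lam - lam1\<bar> < \<delta>"
  shows "isCont Dval lam"
proof -
  have l1: "lam < 1" by (rule mu_lt1[OF lam])
  have x0l: "(x0 \<longlongrightarrow> x0 lam) (at lam)" by (rule x0_at[OF lam])
  have "((\<lambda>mu. tail (\<lambda>t. V mu t * V mu t) (x0 mu) / (DV mu (x0 mu))\<^sup>2) \<longlongrightarrow> tail (\<lambda>t. V lam t * V lam t) (x0 lam) / (DV lam (x0 lam))\<^sup>2) (at lam)"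
    by (intro tendsto_divide tendsto_power tail_prod_cont[OF l1 tendsto_ident_at tendsto_ident_at x0l]
        joint_cont(2)[OF l1 tendsto_ident_at x0l]) (use DVne[OF lam] in simp)
  then show ?thesis unfolding isCont_def Dval_def .
qed

end



context fam1 begin

lemma inb: "lam \<in> ball lam1 \<delta> \<Longrightarrow> \<bar>lam - lam1\<bar> < \<delta>"
  by (simp add: dist_real_def abs_minus_commute)

lemma final:
  shows "\<exists>\<delta>>0. \<exists>x0 :: real \<Rightarrow> real.
           ball lam1 \<delta> \<subseteq> {..<1} \<and>
           x0 C1_differentiable_on ball lam1 \<delta> \<and>
           (\<forall>lam\<in>ball lam1 \<delta>. simple_zero (V lam) (x0 lam)) \<and>
           x0 lam1 = x1 \<and>
           deriv x0 lam1 > 0 \<and>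
           (\<forall>\<epsilon>>0. \<forall>y :: real \<Rightarrow> real.
              (ball lam1 \<epsilon> \<subseteq> {..<1} \<and> y C1_differentiable_on ball lam1 \<epsilon> \<and>
               (\<forall>lam\<in>ball lam1 \<epsilon>. simple_zero (V lam) (y lam)) \<and> y lam1 = x1)
              \<longrightarrow> (\<exists>\<eta>>0. \<forall>lam\<in>ball lam1 \<eta>. y lam = x0 lam))"
proof (intro exI[of _ \<delta>] conjI del(1) exI[of _ x0])
  show "ball lam1 \<delta> \<subseteq> {..<1}" using inb mu_lt1 by auto
  show "x0 C1_differentiable_on ball lam1 \<delta>"
    unfolding C1_differentiable_on_def
  proof (intro exI[of _ Dval] conjI ballI)
    fix lam assume "lam \<in> ball lam1 \<delta>"
    then show "(x0 has_vector_derivative Dval lam) (at lam)"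
      using x0_deriv[OF inb] by (simp add: has_real_derivative_iff_has_vector_derivative)
  next
    show "continuous_on (ball lam1 \<delta>) Dval"
      by (rule continuous_at_imp_continuous_on) (use Dval_cont inb in blast)
  qed
  show "\<forall>lam\<in>ball lam1 \<delta>. simple_zero (V lam) (x0 lam)"
  proof
    fix lam assume l: "lam \<in> ball lam1 \<delta>"
    have l1: "lam < 1" using mu_lt1[OF inb[OF l]] .
    show "simple_zero (V lam) (x0 lam)" unfolding simple_zero_def
      using x0_prop(2)[OF inb[OF l]] dV[OF l1, of "x0 lam"] DVne[OF inb[OF l]]
      by (auto simp: real_differentiable_def)
  qed
  show "x0 lam1 = x1" by (rule x0_lam1)
  have l0: "\<bar>lam1 - lam1\<bar> < \<delta>" using del by simp
  have "deriv x0 lam1 = Dval lam1" by (rule DERIV_imp_deriv[OF x0_deriv[OF l0]])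
  moreover have "Dval lam1 > 0" unfolding Dval_def using Jpos[OF l0] DVne[OF l0] by simp
  ultimately show "deriv x0 lam1 > 0" by simp
  show "\<forall>\<epsilon>>0. \<forall>y :: real \<Rightarrow> real.
              (ball lam1 \<epsilon> \<subseteq> {..<1} \<and> y C1_differentiable_on ball lam1 \<epsilon> \<and>
               (\<forall>lam\<in>ball lam1 \<epsilon>. simple_zero (V lam) (y lam)) \<and> y lam1 = x1)
              \<longrightarrow> (\<exists>\<eta>>0. \<forall>lam\<in>ball lam1 \<eta>. y lam = x0 lam)"
  proof (intro allI impI)
    fix \<epsilon> :: real and y :: "real \<Rightarrow> real"
    assume e: "\<epsilon> > 0"
    assume h: "ball lam1 \<epsilon> \<subseteq> {..<1} \<and> y C1_differentiable_on ball lam1 \<epsilon> \<and>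
               (\<forall>lam\<in>ball lam1 \<epsilon>. simple_zero (V lam) (y lam)) \<and> y lam1 = x1"
    obtain D where D: "\<And>x. x \<in> ball lam1 \<epsilon> \<Longrightarrow> (y has_vector_derivative D x) (at x)"
      using h unfolding C1_differentiable_on_def by blast
    have "continuous (at lam1) y"
      using has_vector_derivative_continuous[OF D[of lam1]] e by simp
    then obtain d where d: "d > 0" "\<And>x'. dist x' lam1 < d \<Longrightarrow> dist (y x') (y lam1) < \<rho>"
      unfolding continuous_at_eps_delta using rho by blast
    show "\<exists>\<eta>>0. \<forall>lam\<in>ball lam1 \<eta>. y lam = x0 lam"
    proof (intro exI[of _ "min d (min \<delta> \<epsilon>)"] conjI ballI)
      show "min d (min \<delta> \<epsilon>) > 0" using d del e by simp
      fix lam assume l: "lam \<in> ball lam1 (min d (min \<delta> \<epsilon>))"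
      then have l\<delta>: "\<bar>lam - lam1\<bar> < \<delta>" and l\<epsilon>: "lam \<in> ball lam1 \<epsilon>" and ld: "dist lam lam1 < d"
        by (auto simp: dist_real_def abs_minus_commute)
      have "simple_zero (V lam) (y lam)" using h l\<epsilon> by blast
      then have vz: "V lam (y lam) = 0" unfolding simple_zero_def by blast
      have "\<bar>y lam - x1\<bar> < \<rho>" using d(2)[OF ld] h by (simp add: dist_real_def)
      then show "y lam = x0 lam" by (rule x0_uniq[OF l\<delta> _ vz])
    qed
  qed
qed

end



theorem lemma5p3:
  fixes p lam1 x1 :: real and V :: "real \<Rightarrow> real \<Rightarrow> real"
  assumes "p > 0"
    and "\<And>lam. lam < 1 \<Longrightarrow> is_sol p lam (V lam)"
    and "\<And>lam W. lam < 1 \<Longrightarrow> is_sol p lam W \<Longrightarrow> W = V lam"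
    and "lam1 < 1"
    and "simple_zero (V lam1) x1"
  shows "\<exists>\<delta>>0. \<exists>x0 :: real \<Rightarrow> real.
           ball lam1 \<delta> \<subseteq> {..<1} \<and>
           x0 C1_differentiable_on ball lam1 \<delta> \<and>
           (\<forall>lam\<in>ball lam1 \<delta>. simple_zero (V lam) (x0 lam)) \<and>
           x0 lam1 = x1 \<and>
           deriv x0 lam1 > 0 \<and>
           (\<forall>\<epsilon>>0. \<forall>y :: real \<Rightarrow> real.
              (ball lam1 \<epsilon> \<subseteq> {..<1} \<and> y C1_differentiable_on ball lam1 \<epsilon> \<and>
               (\<forall>lam\<in>ball lam1 \<epsilon>. simple_zero (V lam) (y lam)) \<and> y lam1 = x1)
              \<longrightarrow> (\<exists>\<eta>>0. \<forall>lam\<in>ball lam1 \<eta>. y lam = x0 lam))"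
proof -
  interpret fam p V by unfold_locales (use assms(1,2) in auto)
  have lam1: "lam1 < 1" by (rule assms(4))
  define s0 where "s0 = DV lam1 x1"
  have s0: "s0 \<noteq> 0" and z1: "V lam1 x1 = 0" using assms(5) unfolding simple_zero_def s0_def by auto
  have s4: "\<bar>s0\<bar>/4 > 0" using s0 by simp
  have "isCont (DV lam1) x1" using contDV[OF lam1] by (simp add: continuous_on_eq_continuous_at)
  then obtain \<rho>1 where r1: "\<rho>1 > 0" "\<And>x. dist x x1 < \<rho>1 \<Longrightarrow> dist (DV lam1 x) (DV lam1 x1) < \<bar>s0\<bar>/4"
    unfolding continuous_at_eps_delta using s4 by blast
  obtain \<delta>1 where d1: "\<delta>1 > 0" "\<And>mu. dist mu lam1 < \<delta>1 \<Longrightarrow>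
      (\<forall>t\<ge>x1 - 1. \<bar>V mu t - V lam1 t\<bar> \<le> \<bar>s0\<bar>/4 \<and> \<bar>DV mu t - DV lam1 t\<bar> \<le> \<bar>s0\<bar>/4)"
    using fam_ucont[OF lam1 s4, of "x1 - 1"] unfolding eventually_nhds_metric by blast
  define \<rho> where "\<rho> = min \<rho>1 1"
  have rho: "\<rho> > 0" "\<rho> \<le> 1" unfolding \<rho>_def using r1 by auto
  have box0: "s0 * DV mu x > 0" if mu: "\<bar>mu - lam1\<bar> < \<delta>1" and x: "\<bar>x - x1\<bar> < \<rho>" for mu x
  proof -
    have "x \<ge> x1 - 1" using x rho by linarith
    then have a: "\<bar>DV mu x - DV lam1 x\<bar> \<le> \<bar>s0\<bar>/4" using d1(2)[of mu] mu by (auto simp: dist_real_def)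
    have b: "\<bar>DV lam1 x - s0\<bar> < \<bar>s0\<bar>/4" using r1(2)[of x] x unfolding s0_def \<rho>_def by (auto simp: dist_real_def)
    have "\<bar>DV mu x - s0\<bar> < \<bar>s0\<bar>/2" using a b by linarith
    then show ?thesis by (rule sign_near[OF s0])
  qed
  have l0: "\<bar>lam1 - lam1\<bar> < \<delta>1" using d1 by simp
  have R: "s0 * V lam1 (x1 + \<rho>/2) > 0"
  proof -
    have "s0 * (V lam1 (x1 + \<rho>/2) - V lam1 x1) > 0"
      by (rule sign_mvt[OF lam1]) (use rho in \<open>auto intro!: box0[OF l0]\<close>)
    then show ?thesis using z1 by simp
  qed
  have L: "s0 * V lam1 (x1 - \<rho>/2) < 0"
  proof -
    have "s0 * (V lam1 x1 - V lam1 (x1 - \<rho>/2)) > 0"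
      by (rule sign_mvt[OF lam1]) (use rho in \<open>auto intro!: box0[OF l0]\<close>)
    then show ?thesis using z1 by simp
  qed
  define m0 where "m0 = min \<bar>V lam1 (x1 + \<rho>/2)\<bar> \<bar>V lam1 (x1 - \<rho>/2)\<bar>"
  have m0: "m0/2 > 0" unfolding m0_def using R L by auto
  obtain \<delta>2 where d2: "\<delta>2 > 0" "\<And>mu. dist mu lam1 < \<delta>2 \<Longrightarrow>
      (\<forall>t\<ge>x1 - 1. \<bar>V mu t - V lam1 t\<bar> \<le> m0/2 \<and> \<bar>DV mu t - DV lam1 t\<bar> \<le> m0/2)"
    using fam_ucont[OF lam1 m0, of "x1 - 1"] unfolding eventually_nhds_metric by blast
  define \<delta> where "\<delta> = min (min \<delta>1 \<delta>2) (1 - lam1)"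
  have del: "\<delta> > 0" "\<delta> \<le> 1 - lam1" unfolding \<delta>_def using d1 d2 lam1 by auto
  interpret fam1 p V lam1 x1 s0 \<rho> \<delta>
  proof unfold_locales
    show "lam1 < 1" "s0 \<noteq> 0" "\<rho> > 0" "\<rho> \<le> 1" "\<delta> > 0" "\<delta> \<le> 1 - lam1" "V lam1 x1 = 0"
      using lam1 s0 rho del z1 by auto
    fix mu x assume mu: "\<bar>mu - lam1\<bar> < \<delta>" and x: "\<bar>x - x1\<bar> < \<rho>"
    show "s0 * DV mu x > 0" by (rule box0[OF _ x]) (use mu in \<open>simp add: \<delta>_def\<close>)
  next
    fix mu assume mu: "\<bar>mu - lam1\<bar> < \<delta>"
    then have u: "\<forall>t\<ge>x1 - 1. \<bar>V mu t - V lam1 t\<bar> \<le> m0/2"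
      using d2(2)[of mu] unfolding \<delta>_def by (simp add: dist_real_def)
    have g: "x1 + \<rho>/2 \<ge> x1 - 1" "x1 - \<rho>/2 \<ge> x1 - 1" using rho by auto
    have "s0 * V mu (x1 + \<rho>/2) > 0"
      by (rule sign_keep[OF R, where m=m0]) (use u g in \<open>auto simp: m0_def\<close>)
    moreover have "(-s0) * V mu (x1 - \<rho>/2) > 0"
      by (rule sign_keep[where A="V lam1 (x1 - \<rho>/2)" and m=m0]) (use L u g in \<open>auto simp: m0_def\<close>)
    ultimately show "s0 * V mu (x1 + \<rho>/2) > 0 \<and> s0 * V mu (x1 - \<rho>/2) < 0" by simp
  qed
  show ?thesis by (rule final)
qed


end
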